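(* Let $n\ge p$. For every $\mathcal X\in\mathrm{St}(n,p,l)$ and $\mathcal V\in T_{\mathcal X}\mathrm{St}(n,p,l)$ the tensor $\mathcal X+\mathcal V$ lies in $L^{-1}(\mathbb C^{n\times p\times l}_* )$, so $qf(\mathcal X+\mathcal V)$ is well defined, and the map $$R_{\mathcal X}(\mathcal V)=qf(\mathcal X+\mathcal V)$$ is a retraction on $\mathrm{St}(n,p,l)$.
   Context: Frontal slices $A^{(i)}=\mathcal A(:,:,i)$. The t-product is $\mathcal A*\mathcal B=\operatorname{fold}(\operatorname{bcirc}(\mathcal A)\operatorname{unfold}(\mathcal B))$, where $\operatorname{bcirc}(\mathcal A)$ is the block circulant matrix with $(i,j)$ block $A^{(((i-j)\bmod l)+1)}$, $\operatorname{unfold}$ stacks frontal slices vertically, $\operatorname{fold}$ is its inverse. Transpose: $\mathcal A^\top$ has frontal slices $(A^{(1)})^\top,(A^{(l)})^\top,\dots,(A^{(2)})^\top$. $\mathcal I$ is the identity tensor (first frontal slice identity, others zero). $\mathrm{St}(n,p,l)=\{\mathcal X\in\mathbb R^{n\times p\times l}:\mathcal X^\top*\mathcal X=\mathcal I\}$, an embedded submanifold of $\mathbb R^{n\times p\times l}$ with tangent spaces $T_{\mathcal X}\mathrm{St}(n,p,l)$. The DFT $L(\mathcal A)=\hat{\mathcal A}$ has frontal slices $\hat A^{(k)}=\sum_{j=1}^l\omega^{(k-1)(j-1)}A^{(j)}$, $\omega=e^{-2\pi\mathrm i/l}$; $L^{-1}$ is its inverse; $\mathcal C=\mathcal A*\mathcal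 B$ iff $\hat C^{(k)}=\hat A^{(k)}\hat B^{(k)}$ for all $k$. $\mathbb C^{n\times p\times l}_*$ is the set of complex tensors all of whose frontal slices have full column rank $p$; $\mathbb C^{p\times p\times l}_{upp+}$ is the set of complex tensors whose frontal slices are upper triangular with real, strictly positive diagonal. Every $\mathcal A\in L^{-1}(\mathbb C^{n\times p\times l}_* )$ has a unique t-QR decomposition $\mathcal A=\mathcal Q*\mathcal R$ with $\mathcal Q\in\mathrm{St}(n,p,l)$ and $\mathcal R\in L^{-1}(\mathbb C^{p\times p\times l}_{upp+})$; $qf(\mathcal A):=\mathcal Q$. A retraction on a manifold $M$ is a smooth map $R:TM\to M$ such that, with $R_x$ its restriction to $T_xM$, $R_x(0_x)=x$ and $\mathrm DR_x(0_x)$ is the identity of $T_xM$. *)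

theory Defs
  imports "HOL-Analysis.Analysis"
begin

text \<open>Frontal slices are indexed by a finite type 'l of class enum; the slice
 numbered k (0-based, i.e. the paper's A^(k+1)) is the k-th element of the
 canonical enumeration of 'l.  Rows/columns of slices are indexed by finite
 types 'n, 'p; the order on 'p used for upper triangularity is again given
 by the enumeration.\<close>

definition ix :: "'l::enum \<Rightarrow> nat" where
  "ix x = (LEAST k. (enum_class.enum :: 'l list) ! k = x)"

definition sl :: "nat \<Rightarrow> 'l::enum" where
  "sl k = (enum_class.enum :: 'l list) ! (k mod CARD('l))"

text \<open>A tensor A in R^{n x p x l} is A :: real^'l^'p^'n with A(i,j,k) = A$i$j$k.\<close>

definition fslice :: "'a^'l^'p^'n \<Rightarrow> 'l \<Rightarrow> 'a^'p^'n" where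
  "fslice A k = (\<chi> i j. A$i$j$k)"

definition bcirc :: "real^('l::enum)^'p^'n \<Rightarrow> real^('p \<times> 'l)^('n \<times> 'l)" where
  "bcirc A = (\<chi> x y. A$(fst x)$(fst y)$(sl ((ix (snd x) + CARD('l) - ix (snd y)) mod CARD('l))))"

definition unfold_t :: "real^'l^'q^'p \<Rightarrow> real^'q^('p \<times> 'l)" where
  "unfold_t B = (\<chi> x j. B$(fst x)$j$(snd x))"

definition fold_t :: "real^'q^('n \<times> 'l) \<Rightarrow> real^'l^'q^'n" where
  "fold_t M = (\<chi> i j k. M$(i,k)$j)"

definition tprod :: "real^('l::enum)^'p^'n \<Rightarrow> real^('l::enum)^'q^'p \<Rightarrow> real^('l::enum)^'q^'n"
    (infixl "\<star>" 70) where
  "A \<star> B = fold_t (bcirc A ** unfold_t B)"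

definition ttrans :: "real^('l::enum)^'p^'n \<Rightarrow> real^('l::enum)^'n^'p" where
  "ttrans A = (\<chi> i j k. A$j$i$(sl ((CARD('l) - ix k) mod CARD('l))))"

definition tid :: "real^('l::enum)^'p^'p" where
  "tid = (\<chi> i j k. if i = j \<and> ix k = 0 then 1 else 0)"

definition stiefel :: "(real^('l::enum)^'p^'n) set" where
  "stiefel = {X. ttrans X \<star> X = tid}"

definition omega :: "'l::enum itself \<Rightarrow> complex" where
  "omega _ = cis (- 2 * pi / real CARD('l))"

definition dft :: "real^('l::enum)^'p^'n \<Rightarrow> complex^('l::enum)^'p^'n" where
  "dft A = (\<chi> i j k. \<Sum>k'\<in>UNIV. omega TYPE('l) ^ (ix k * ix k') * complex_of_real (A$i$j$k'))"

definition Cstar :: "(complex^'l^'p^'n) set" where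
  "Cstar = {A. \<forall>k. rank (fslice A k) = CARD('p)}"

definition Cupp_pos :: "(complex^('l::enum)^('p::enum)^('p::enum)) set" where
  "Cupp_pos = {A. \<forall>k. (\<forall>i j. ix j < ix i \<longrightarrow> A$i$j$k = 0) \<and>
                     (\<forall>i. Im (A$i$i$k) = 0 \<and> Re (A$i$i$k) > 0)}"

definition qf :: "real^('l::enum)^('p::enum)^'n \<Rightarrow> real^('l::enum)^('p::enum)^'n" where
  "qf A = (THE Q. Q \<in> stiefel \<and> (\<exists>R. dft R \<in> Cupp_pos \<and> A = Q \<star> R))"

definition dirderiv :: "('a::real_normed_vector \<Rightarrow> 'b::real_normed_vector) \<Rightarrow> 'a \<Rightarrow> 'a \<Rightarrow> 'b" where
  "dirderiv f v x = vector_derivative (\<lambda>t. f (x + t *\<^sub>R v)) (at 0)"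

fun iter_dd :: "'a::real_normed_vector list \<Rightarrow> ('a \<Rightarrow> 'b::real_normed_vector) \<Rightarrow> 'a \<Rightarrow> 'b" where
  "iter_dd [] f = f"
| "iter_dd (v # vs) f = dirderiv (iter_dd vs f) v"

definition smooth_on :: "'a::euclidean_space set \<Rightarrow> ('a \<Rightarrow> 'b::real_normed_vector) \<Rightarrow> bool" where
  "smooth_on U f \<longleftrightarrow> open U \<and>
     (\<forall>vs. continuous_on U (iter_dd vs f) \<and>
        (\<forall>v. \<forall>x\<in>U. (\<lambda>t. iter_dd vs f (x + t *\<^sub>R v)) differentiable (at 0)))"

definition smooth_on_set :: "'a::euclidean_space set \<Rightarrow> ('a \<Rightarrow> 'b::real_normed_vector) \<Rightarrow> bool" where
  "smooth_on_set S f \<longleftrightarrow> (\<forall>z\<in>S. \<exists>U F. open U \<and> z \<in> U \<and> smooth_on U F \<and> (\<forall>w\<in>U \<inter> S. F w = f w))"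

definition tangent_space :: "'a::euclidean_space set \<Rightarrow> 'a \<Rightarrow> 'a set" where
  "tangent_space M x = {v. \<exists>\<gamma> e. e > 0 \<and> smooth_on {-e<..<e} \<gamma> \<and>
       (\<forall>t\<in>{-e<..<e}. \<gamma> t \<in> M) \<and> \<gamma> 0 = x \<and> (\<gamma> has_vector_derivative v) (at 0)}"

definition tangent_bundle :: "'a::euclidean_space set \<Rightarrow> ('a \<times> 'a) set" where
  "tangent_bundle M = {(x, v). x \<in> M \<and> v \<in> tangent_space M x}"

text \<open>Retraction: smooth R : TM -> M with R_x(0_x) = x and DR_x(0_x) = id on T_xM
 (the differential of R_x at 0 in direction v is d/dt R_x(t v) at t = 0).\<close>
definition is_retraction :: "'a::euclidean_space set \<Rightarrow> ('a \<times> 'a \<Rightarrow> 'a) \<Rightarrow> bool" where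
  "is_retraction M R \<longleftrightarrow>
     (\<forall>z\<in>tangent_bundle M. R z \<in> M) \<and>
     smooth_on_set (tangent_bundle M) R \<and>
     (\<forall>x\<in>M. R (x, 0) = x) \<and>
     (\<forall>x\<in>M. \<forall>v\<in>tangent_space M x. ((\<lambda>t. R (x, t *\<^sub>R v)) has_vector_derivative v) (at 0))"

end

theory Submission
  imports Defs
begin


lemma len_enum: "length (enum_class.enum :: 'l::enum list) = CARD('l)"
  by (simp add: card_UNIV_length_enum)

lemma ix_props: "ix (k::'l::enum) < CARD('l) \<and> (enum_class.enum :: 'l list) ! ix k = k"
proof -
  have "k \<in> set (enum_class.enum :: 'l list)" by (simp add: enum_UNIV)
  then obtain m where m: "m < length (enum_class.enum :: 'l list)" "(enum_class.enum :: 'l list) ! m = k"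
    by (metis in_set_conv_nth)
  have "(enum_class.enum :: 'l list) ! ix k = k" unfolding ix_def
    by (rule LeastI[of _ m]) (use m in auto)
  moreover have "ix k \<le> m" unfolding ix_def by (rule Least_le) (use m in auto)
  ultimately show ?thesis using m len_enum[where 'l='l] by auto
qed

lemma ix_lt[simp]: "ix (k::'l::enum) < CARD('l)" using ix_props by blast
lemma ix_le: "ix (k::'l::enum) \<le> CARD('l)" using ix_props less_imp_le by blast
lemma enum_ix: "(enum_class.enum :: 'l::enum list) ! ix k = k" using ix_props by blast

lemma card_pos: "0 < CARD('l::enum)" by simp

lemma sl_ix[simp]: "sl (ix k) = (k::'l::enum)"
  by (simp add: sl_def enum_ix)

lemma ix_nth: assumes "m < CARD('l::enum)" shows "ix ((enum_class.enum :: 'l list) ! m) = m"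
proof -
  let ?e = "enum_class.enum :: 'l list"
  have d: "distinct ?e" by (rule enum_distinct)
  have "?e ! ix (?e ! m) = ?e ! m" by (rule enum_ix)
  then show ?thesis using d assms len_enum[where 'l='l] ix_lt[of "?e ! m"]
    by (simp add: nth_eq_iff_index_eq)
qed

lemma ix_sl[simp]: "ix (sl m :: 'l::enum) = m mod CARD('l)"
  unfolding sl_def by (rule ix_nth) simp

lemma ix_inj: "ix (a::'l::enum) = ix b \<longleftrightarrow> a = b"
  by (metis sl_ix)

lemma sum_l: "(\<Sum>k\<in>UNIV. f k) = (\<Sum>m<CARD('l::enum). f (sl m :: 'l))"
  by (rule sum.reindex_bij_witness[where i=sl and j=ix and h="\<lambda>m. f (sl m)"]) auto


lemma w_pow: "omega TYPE('l::enum) ^ n = cis (- 2 * pi * real n / real CARD('l))"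
  by (simp add: omega_def Complex.DeMoivre mult.commute)

lemma w_pow_L: "omega TYPE('l::enum) ^ CARD('l) = 1"
proof -
  have "cis (- 2 * pi * real CARD('l) / real CARD('l)) = 1" by (simp add: complex_eq_iff)
  then show ?thesis by (simp add: w_pow)
qed

lemma norm_w_pow[simp]: "norm (omega TYPE('l::enum) ^ n) = 1"
  by (simp add: w_pow)

lemma w_pow_mod: "omega TYPE('l::enum) ^ a = omega TYPE('l) ^ (a mod CARD('l))"
proof -
  have "a = a mod CARD('l) + CARD('l) * (a div CARD('l))" by simp
  then have "omega TYPE('l) ^ a = omega TYPE('l) ^ (a mod CARD('l)) * (omega TYPE('l) ^ CARD('l)) ^ (a div CARD('l))"
    by (metis power_add power_mult)
  then show ?thesis by (simp add: w_pow_L)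
qed

lemma w_dvd_1: "CARD('l::enum) dvd n \<Longrightarrow> omega TYPE('l) ^ n = 1"
  by (metis dvd_def power_mult w_pow_L power_one)

lemma w_dvd_cnj: assumes "CARD('l::enum) dvd (x + y)"
  shows "omega TYPE('l) ^ x = cnj (omega TYPE('l) ^ y)"
proof -
  let ?a = "omega TYPE('l) ^ x" and ?b = "omega TYPE('l) ^ y"
  have 1: "?a * ?b = 1" using w_dvd_1[OF assms] by (simp add: power_add)
  have 2: "cnj ?b * ?b = 1"
    by (metis complex_norm_square mult.commute norm_w_pow of_real_1 power_one)
  have "?b \<noteq> 0" by (metis norm_w_pow norm_zero zero_neq_one)
  with 1 2 show ?thesis by (metis mult_right_cancel)
qed

lemma cnj_w_pow: "cnj (omega TYPE('l::enum) ^ n) = omega TYPE('l) ^ (n * (CARD('l) - 1))"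
proof -
  have "CARD('l) dvd (n * (CARD('l) - 1) + n)"
  proof -
    have "n * (CARD('l) - 1) + n = n * CARD('l)" using card_pos[where 'l='l]
      by (simp add: algebra_simps)
    then show ?thesis by simp
  qed
  then show ?thesis by (simp add: w_dvd_cnj)
qed

lemma w_pow_eq1: "omega TYPE('l::enum) ^ d = 1 \<longleftrightarrow> CARD('l) dvd d"
proof -
  have "omega TYPE('l) ^ d = cnj (exp (2 * of_real pi * \<i> * of_nat d / of_nat CARD('l)))"
  proof -
    have "exp (2 * of_real pi * \<i> * of_nat d / of_nat CARD('l)) = cis (2 * pi * real d / real CARD('l))"
      by (simp add: cis_conv_exp mult.commute mult.left_commute)
    then show ?thesis by (simp add: w_pow cis_cnj)
  qed
  then have "omega TYPE('l) ^ d = 1 \<longleftrightarrow> exp (2 * of_real pi * \<i> * of_nat d / of_nat CARD('l)) = 1"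
    by (metis complex_cnj_cnj complex_cnj_one)
  also have "\<dots> \<longleftrightarrow> CARD('l) dvd d"
    by (rule complex_root_unity_eq_1) (simp add: Suc_leI)
  finally show ?thesis .
qed

lemma geom_w: "(\<Sum>m<CARD('l::enum). (omega TYPE('l) ^ d) ^ m) = (if CARD('l) dvd d then of_nat CARD('l) else 0)"
proof (cases "CARD('l) dvd d")
  case True
  then show ?thesis by (simp add: w_dvd_1)
next
  case False
  then have ne: "omega TYPE('l) ^ d \<noteq> 1" by (simp add: w_pow_eq1)
  have "(omega TYPE('l) ^ d) ^ CARD('l) = 1"
    by (metis power_mult power_mult_distrib mult.commute w_pow_L power_one)
  then show ?thesis using False ne by (simp add: geometric_sum)
qed

lemma dvd_iff_eq: assumes "a < CARD('l::enum)" "b < CARD('l)"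
  shows "CARD('l) dvd (a + b * (CARD('l) - 1)) \<longleftrightarrow> a = b"
proof -
  let ?L = "CARD('l)"
  have e0: "int (a + b * (?L - 1)) = int a + int b * (int ?L - 1)"
    using card_pos[where 'l='l] by (simp add: of_nat_diff)
  have e: "int (a + b * (?L - 1)) = int a - int b + int b * int ?L"
    unfolding e0 by (simp add: algebra_simps)
  have "?L dvd (a + b * (?L - 1)) \<longleftrightarrow> int ?L dvd (int a - int b)"
    by (metis e int_dvd_int_iff dvd_add_times_triv_right_iff mult.commute)
  also have "\<dots> \<longleftrightarrow> a = b"
  proof
    assume "int ?L dvd (int a - int b)"
    moreover have "\<bar>int a - int b\<bar> < int ?L" using assms by auto
    ultimately have "int a - int b = 0" using dvd_imp_le_int[of "int a - int b" "int ?L"] by force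
    then show "a = b" by simp
  qed simp
  finally show ?thesis .
qed

lemma orth: assumes "a < CARD('l::enum)" "b < CARD('l)"
  shows "(\<Sum>k\<in>(UNIV::'l set). omega TYPE('l) ^ (ix k * a) * cnj (omega TYPE('l) ^ (ix k * b))) = (if a = b then of_nat CARD('l) else 0)"
proof -
  let ?d = "a + b * (CARD('l) - 1)"
  have "omega TYPE('l) ^ (ix k * a) * cnj (omega TYPE('l) ^ (ix k * b)) = (omega TYPE('l) ^ ?d) ^ ix k" for k :: 'l
  proof -
    have "omega TYPE('l) ^ (ix k * a) * cnj (omega TYPE('l) ^ (ix k * b)) = omega TYPE('l) ^ (ix k * a) * omega TYPE('l) ^ (ix k * b * (CARD('l) - 1))"
      by (simp only: cnj_w_pow)
    also have "\<dots> = omega TYPE('l) ^ (ix k * a + ix k * b * (CARD('l) - 1))" by (simp only: power_add)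
    also have "ix k * a + ix k * b * (CARD('l) - 1) = ?d * ix k" by (simp add: algebra_simps)
    finally show ?thesis by (simp only: power_mult)
  qed
  then have "(\<Sum>k\<in>(UNIV::'l set). omega TYPE('l) ^ (ix k * a) * cnj (omega TYPE('l) ^ (ix k * b))) = (\<Sum>m<CARD('l). (omega TYPE('l) ^ ?d) ^ m)"
    by (simp add: sum_l)
  also have "\<dots> = (if a = b then of_nat CARD('l) else 0)" by (simp only: geom_w dvd_iff_eq[OF assms])
  finally show ?thesis .
qed


lemma tprod_nth:
  fixes A :: "real^('l::enum)^'p^'n" and B :: "real^('l::enum)^'q^'p"
  shows "(A \<star> B)$i$j$k = (\<Sum>m\<in>UNIV. \<Sum>k'\<in>UNIV. A$i$m$(sl ((ix k + CARD('l) - ix k') mod CARD('l))) * B$m$j$k')"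
  unfolding tprod_def fold_t_def bcirc_def unfold_t_def matrix_matrix_mult_def
  by (simp add: UNIV_Times_UNIV[symmetric] sum.cartesian_product case_prod_beta del: UNIV_Times_UNIV)

lemma dft_nth:
  fixes A :: "real^('l::enum)^'p^'n"
  shows "dft A $i$j$k = (\<Sum>k'\<in>UNIV. omega TYPE('l) ^ (ix k * ix k') * complex_of_real (A$i$j$k'))"
  unfolding dft_def by simp


lemma mod_aux1: assumes "x < (L::nat)" "c < L" shows "((x + c) mod L + L - c) mod L = x"
proof (cases "x + c < L")
  case True then show ?thesis using assms by simp
next
  case False
  then have "(x + c) mod L = x + c - L" using assms by (simp add: mod_if)
  then show ?thesis using assms False by simp
qed

lemma mod_aux2: assumes "x < (L::nat)" "c < L" shows "((x + L - c) mod L + c) mod L = x"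
proof (cases "c \<le> x")
  case True
  then have "(x + L - c) mod L = x - c" using assms
    by (metis add.commute add_diff_assoc mod_add_self2 mod_less diff_less_Suc less_imp_diff_less)
  then show ?thesis using assms True by simp
next
  case False
  then have "(x + L - c) mod L = x + L - c" using assms by simp
  then show ?thesis using assms False by (simp add: mod_if)
qed

lemma w_shift: "omega TYPE('l::enum) ^ (a * ((b + c) mod CARD('l))) = omega TYPE('l) ^ (a * b) * omega TYPE('l) ^ (a * c)"
  by (metis w_pow_mod mod_mult_right_eq power_add add_mult_distrib2)



lemma shift_sum:
  fixes f :: "'l::enum \<Rightarrow> complex" and c :: 'l
  shows "(\<Sum>k::'l\<in>UNIV. omega TYPE('l) ^ (n * ix k) * f (sl ((ix k + CARD('l) - ix c) mod CARD('l))))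
        = omega TYPE('l) ^ (n * ix c) * (\<Sum>a\<in>UNIV. omega TYPE('l) ^ (n * ix a) * f a)"
proof -
  let ?L = "CARD('l)"
  define g :: "'l \<Rightarrow> 'l" where "g k = sl ((ix k + ?L - ix c) mod ?L)" for k
  define h :: "'l \<Rightarrow> 'l" where "h a = sl ((ix a + ix c) mod ?L)" for a
  have ixg: "ix (g k) = (ix k + ?L - ix c) mod ?L" for k unfolding g_def by simp
  have ixh: "ix (h k) = (ix k + ix c) mod ?L" for k unfolding h_def by simp
  have gh: "g (h a) = a" for a
  proof -
    have "ix (g (h a)) = ix a" unfolding ixg ixh by (rule mod_aux1) (auto simp del: ix_lt intro: ix_lt)
    then show ?thesis by (simp add: ix_inj)
  qed
  have hg: "h (g a) = a" for a
  proof -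
    have "ix (h (g a)) = ix a" unfolding ixg ixh by (rule mod_aux2) auto
    then show ?thesis by (simp add: ix_inj)
  qed
  have "(\<Sum>k\<in>UNIV. omega TYPE('l) ^ (n * ix k) * f (g k))
      = (\<Sum>a\<in>UNIV. omega TYPE('l) ^ (n * ix c) * (omega TYPE('l) ^ (n * ix a) * f a))"
  proof (rule sum.reindex_bij_witness[where i=h and j=g])
    fix k :: 'l
    have e: "ix k = (ix (g k) + ix c) mod ?L" using hg[of k] ixh[of "g k"] by simp
    have "omega TYPE('l) ^ (n * ix k) = omega TYPE('l) ^ (n * ix (g k)) * omega TYPE('l) ^ (n * ix c)"
      by (subst e) (rule w_shift)
    then show "omega TYPE('l) ^ (n * ix c) * (omega TYPE('l) ^ (n * ix (g k)) * f (g k)) =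
         omega TYPE('l) ^ (n * ix k) * f (g k)" by (simp only: mult_ac)
  qed (auto simp: gh hg)
  then show ?thesis by (simp add: sum_distrib_left g_def)
qed


lemma dft_tprod:
  fixes A :: "real^('l::enum)^'p^'n" and B :: "real^('l::enum)^'q^'p"
  shows "dft (A \<star> B) $i$j$k = (\<Sum>m\<in>UNIV. dft A $i$m$k * dft B $m$j$k)"
proof -
  let ?w = "omega TYPE('l)" and ?L = "CARD('l)"
  have "dft (A \<star> B) $i$j$k = (\<Sum>k2::'l\<in>UNIV. ?w ^ (ix k * ix k2) *
      (\<Sum>m\<in>UNIV. \<Sum>k'\<in>UNIV. of_real (A$i$m$(sl ((ix k2 + ?L - ix k') mod ?L))) * of_real (B$m$j$k')))"
    by (simp add: dft_nth tprod_nth)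
  also have "\<dots> = (\<Sum>m\<in>UNIV. \<Sum>k'\<in>UNIV. of_real (B$m$j$k') * (\<Sum>k2::'l\<in>UNIV. ?w ^ (ix k * ix k2) * of_real (A$i$m$(sl ((ix k2 + ?L - ix k') mod ?L)))))"
  proof -
    have "(\<Sum>k2::'l\<in>UNIV. ?w ^ (ix k * ix k2) *
      (\<Sum>m\<in>UNIV. \<Sum>k'\<in>UNIV. of_real (A$i$m$(sl ((ix k2 + ?L - ix k') mod ?L))) * of_real (B$m$j$k')))
      = (\<Sum>k2::'l\<in>UNIV. \<Sum>m\<in>UNIV. \<Sum>k'\<in>UNIV. of_real (B$m$j$k') * (?w ^ (ix k * ix k2) * of_real (A$i$m$(sl ((ix k2 + ?L - ix k') mod ?L)))))"
      by (simp add: sum_distrib_left mult_ac)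
    also have "\<dots> = (\<Sum>m\<in>UNIV. \<Sum>k'\<in>UNIV. \<Sum>k2::'l\<in>UNIV. of_real (B$m$j$k') * (?w ^ (ix k * ix k2) * of_real (A$i$m$(sl ((ix k2 + ?L - ix k') mod ?L)))))"
      by (subst sum.swap) (rule sum.cong, simp, rule sum.swap)
    also have "\<dots> = (\<Sum>m\<in>UNIV. \<Sum>k'\<in>UNIV. of_real (B$m$j$k') * (\<Sum>k2::'l\<in>UNIV. ?w ^ (ix k * ix k2) * of_real (A$i$m$(sl ((ix k2 + ?L - ix k') mod ?L)))))"
      by (simp only: sum_distrib_left)
    finally show ?thesis .
  qed
  also have "\<dots> = (\<Sum>m\<in>UNIV. \<Sum>k'\<in>UNIV. of_real (B$m$j$k') * (?w ^ (ix k * ix k') * dft A $i$m$k))"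
    by (simp only: shift_sum[where f="\<lambda>a. of_real (A$i$_$a)"] dft_nth)
  also have "\<dots> = (\<Sum>m\<in>UNIV. dft A $i$m$k * dft B $m$j$k)"
    by (simp add: dft_nth sum_distrib_left sum_distrib_right mult_ac)
  finally show ?thesis .
qed

definition neg :: "'l::enum \<Rightarrow> 'l" where
  "neg k = sl ((CARD('l) - ix k) mod CARD('l))"

lemma ix_neg: "ix (neg k) = (CARD('l) - ix k) mod CARD('l)" for k :: "'l::enum"
  unfolding neg_def by simp

lemma neg_neg[simp]: "neg (neg k) = k" for k :: "'l::enum"
proof -
  have "ix (neg (neg k)) = ix k"
  proof (cases "ix k = 0")
    case True then show ?thesis by (simp add: ix_neg)
  next
    case False
    then have "(CARD('l) - ix k) mod CARD('l) = CARD('l) - ix k" by simp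
    then show ?thesis using False ix_le[of k] by (simp add: ix_neg)
  qed
  then show ?thesis by (simp add: ix_inj)
qed

lemma w_neg: "omega TYPE('l) ^ (a * ix (neg k)) = cnj (omega TYPE('l) ^ (a * ix k))" for k :: "'l::enum"
proof (rule w_dvd_cnj)
  show "CARD('l) dvd (a * ix (neg k) + a * ix k)"
  proof (cases "ix k = 0")
    case True then show ?thesis by (simp add: ix_neg)
  next
    case False
    then have "ix (neg k) = CARD('l) - ix k" using ix_lt[of k] by (simp add: ix_neg)
    then have "a * ix (neg k) + a * ix k = a * CARD('l)" using ix_le[of k]
      by (simp add: add_mult_distrib2[symmetric])
    then show ?thesis by simp
  qed
qed

lemma sum_neg: "(\<Sum>k\<in>UNIV. f (neg k)) = (\<Sum>k\<in>UNIV. f k)" for f :: "'l::enum \<Rightarrow> 'a::comm_monoid_add"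
  by (rule sum.reindex_bij_witness[where i=neg and j=neg]) auto

lemma ttrans_nth: "ttrans A $i$j$k = A$j$i$(neg k)"
  unfolding ttrans_def neg_def by simp

lemma dft_ttrans: "dft (ttrans A) $i$j$k = cnj (dft A $j$i$k)" for A :: "real^('l::enum)^'p^'n"
proof -
  have "dft (ttrans A) $i$j$k = (\<Sum>k'\<in>UNIV. omega TYPE('l) ^ (ix k * ix k') * of_real (A$j$i$(neg k')))"
    by (simp add: dft_nth ttrans_nth)
  also have "\<dots> = (\<Sum>k'\<in>UNIV. omega TYPE('l) ^ (ix k * ix (neg k')) * of_real (A$j$i$k'))"
    by (subst sum_neg[symmetric]) simp
  also have "\<dots> = cnj (dft A $j$i$k)"
    by (simp add: dft_nth w_neg)
  finally show ?thesis .
qed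

lemma dft_neg: "dft A $i$j$(neg k) = cnj (dft A $i$j$k)" for A :: "real^('l::enum)^'p^'n"
  by (simp add: dft_nth w_neg mult.commute)

lemma dft_tid: "dft (tid :: real^('l::enum)^'p^'p) $i$j$k = (if i = j then 1 else 0)"
proof -
  have "dft (tid :: real^('l::enum)^'p^'p) $i$j$k = (\<Sum>m<CARD('l). omega TYPE('l) ^ (ix k * m) * complex_of_real (if i = j \<and> m = 0 then 1 else 0))"
    by (simp add: dft_nth tid_def sum_l)
  also have "\<dots> = (\<Sum>m<CARD('l). if m = 0 then (if i = j then 1 else 0) else 0)"
    by (rule sum.cong) auto
  also have "\<dots> = (if i = j then 1 else 0)" by simp
  finally show ?thesis .
qed

lemma dft_add: "dft (A + B) = dft A + dft B"
  by (simp add: dft_def vec_eq_iff sum.distrib algebra_simps)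

lemma dft_scale: "dft (c *\<^sub>R A) = c *\<^sub>R dft A"
  unfolding dft_def by (simp add: vec_eq_iff) (simp add: scaleR_conv_of_real sum_distrib_left mult_ac)

lemma dft_zero[simp]: "dft 0 = 0"
  by (simp add: dft_def vec_eq_iff)

lemma dft_diff: "dft (A - B) = dft A - dft B"
  by (simp add: dft_def vec_eq_iff sum_subtractf algebra_simps)

definition idft :: "complex^('l::enum)^'p^'n \<Rightarrow> real^('l::enum)^'p^'n" where
  "idft C = (\<chi> i j k. Re (\<Sum>\<kappa>\<in>UNIV. cnj (omega TYPE('l) ^ (ix \<kappa> * ix k)) * C$i$j$\<kappa>) / real CARD('l))"

lemma idft_dft: "idft (dft A) = A" for A :: "real^('l::enum)^'p^'n"
proof -
  have "(\<Sum>\<kappa>\<in>UNIV. cnj (omega TYPE('l) ^ (ix \<kappa> * ix k)) * dft A$i$j$\<kappa>) = of_nat CARD('l) * of_real (A$i$j$k)"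
    for i j and k :: 'l
  proof -
    have "(\<Sum>\<kappa>\<in>UNIV. cnj (omega TYPE('l) ^ (ix \<kappa> * ix k)) * dft A$i$j$\<kappa>)
        = (\<Sum>k'\<in>UNIV. of_real (A$i$j$k') * (\<Sum>\<kappa>::'l\<in>UNIV. omega TYPE('l) ^ (ix \<kappa> * ix k') * cnj (omega TYPE('l) ^ (ix \<kappa> * ix k))))"
      by (simp only: dft_nth sum_distrib_left, subst sum.swap, rule sum.cong[OF refl], rule sum.cong[OF refl], simp only: mult_ac)
    also have "\<dots> = (\<Sum>k'\<in>UNIV. of_real (A$i$j$k') * (if ix k' = ix k then of_nat CARD('l) else 0))"
      by (simp only: orth ix_lt)
    also have "\<dots> = of_nat CARD('l) * of_real (A$i$j$k)"
      by (simp add: ix_inj if_distrib cong: if_cong)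
    finally show ?thesis .
  qed
  then show ?thesis by (simp add: idft_def vec_eq_iff)
qed

lemma dft_inj: "dft A = dft B \<Longrightarrow> A = B" for A B :: "real^('l::enum)^'p^'n"
  by (metis idft_dft)

definition csym :: "complex^('l::enum)^'p^'n \<Rightarrow> bool" where
  "csym C \<longleftrightarrow> (\<forall>i j k. C$i$j$(neg k) = cnj (C$i$j$k))"

lemma csym_dft: "csym (dft A)"
  by (simp add: csym_def dft_neg)


lemma cnj_eq_real: "cnj z = z \<Longrightarrow> complex_of_real (Re z) = z"
  by (simp add: complex_eq_iff)

lemma dft_idft: fixes C :: "complex^('l::enum)^'p^'n" assumes "csym C" shows "dft (idft C) = C"
proof -
  let ?s = "\<lambda>i j (k::'l). (\<Sum>\<kappa>\<in>UNIV. cnj (omega TYPE('l) ^ (ix \<kappa> * ix k)) * C$i$j$\<kappa>)"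
  have real: "of_real (Re (?s i j k)) = ?s i j k" for i j k
  proof -
    have "cnj (?s i j k) = (\<Sum>\<kappa>\<in>UNIV. omega TYPE('l) ^ (ix \<kappa> * ix k) * C$i$j$(neg \<kappa>))"
      using assms by (simp add: csym_def)
    also have "\<dots> = (\<Sum>\<kappa>\<in>UNIV. omega TYPE('l) ^ (ix (neg \<kappa>) * ix k) * C$i$j$\<kappa>)"
      by (subst sum_neg[symmetric]) simp
    also have "\<dots> = ?s i j k" by (simp add: w_neg mult.commute)
    finally show ?thesis by (rule cnj_eq_real)
  qed
  have "dft (idft C) $i$j$k0 = C$i$j$k0" for i j k0
  proof -
    have "dft (idft C) $i$j$k0 = (\<Sum>k\<in>UNIV. omega TYPE('l) ^ (ix k0 * ix k) * (?s i j k / of_nat CARD('l)))"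
      unfolding dft_nth idft_def using real by simp
    also have "\<dots> = (\<Sum>\<kappa>\<in>UNIV. C$i$j$\<kappa> * (\<Sum>k::'l\<in>UNIV. omega TYPE('l) ^ (ix k * ix k0) * cnj (omega TYPE('l) ^ (ix k * ix \<kappa>)))) / of_nat CARD('l)"
      by (simp only: sum_distrib_left sum_divide_distrib, subst sum.swap, rule sum.cong[OF refl], rule sum.cong[OF refl], simp only: mult_ac times_divide_eq_right)
    also have "\<dots> = (\<Sum>\<kappa>\<in>UNIV. C$i$j$\<kappa> * (if ix k0 = ix \<kappa> then of_nat CARD('l) else 0)) / of_nat CARD('l)"
      by (simp only: orth ix_lt)
    also have "\<dots> = C$i$j$k0"
      by (simp add: ix_inj if_distrib cong: if_cong)
    finally show ?thesis .
  qed
  then show ?thesis by (simp add: vec_eq_iff)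
qed


definition ip :: "complex^'n \<Rightarrow> complex^'n \<Rightarrow> complex" where
  "ip u v = (\<Sum>i\<in>UNIV. cnj (u$i) * v$i)"

lemma ip_add_right: "ip u (v + w) = ip u v + ip u w"
  by (simp add: ip_def sum.distrib algebra_simps)
lemma ip_diff_right: "ip u (v - w) = ip u v - ip u w"
  by (simp add: ip_def sum_subtractf algebra_simps)
lemma ip_scale_right: "ip u (c *s v) = c * ip u v"
  by (simp add: ip_def sum_distrib_left algebra_simps)
lemma ip_scale_left: "ip (c *s u) v = cnj c * ip u v"
  by (simp add: ip_def sum_distrib_left algebra_simps)
lemma ip_sum_right: "ip u (sum f S) = (\<Sum>s\<in>S. ip u (f s))"
  by (simp add: ip_def sum_component sum_distrib_left) (rule sum.swap)
lemma ip_cnj: "cnj (ip u v) = ip v u"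
  by (simp add: ip_def mult.commute)

lemma ip_self: "ip u u = of_real (\<Sum>i\<in>UNIV. (cmod (u$i))^2)"
  unfolding ip_def of_real_sum by (rule sum.cong) (simp_all add: complex_norm_square mult.commute del: of_real_power)

lemma ip_self_Re_pos: "0 < Re (ip u u) \<longleftrightarrow> u \<noteq> 0"
proof -
  have "Re (ip u u) = (\<Sum>i\<in>UNIV. (cmod (u$i))^2)" by (simp add: ip_self)
  moreover have "(\<Sum>i\<in>UNIV. (cmod (u$i))^2) = 0 \<longleftrightarrow> (\<forall>i. u$i = 0)"
    by (subst sum_nonneg_eq_0_iff) auto
  moreover have "0 \<le> (\<Sum>i\<in>UNIV. (cmod (u$i))^2)" by (simp add: sum_nonneg)
  ultimately show ?thesis by (auto simp: vec_eq_iff)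
qed

lemma ip_self_zero: "ip u u = 0 \<longleftrightarrow> u = 0"
proof
  assume "ip u u = 0"
  then have "\<not> 0 < Re (ip u u)" by simp
  then show "u = 0" using ip_self_Re_pos by blast
qed (simp add: ip_def)

definition colm :: "complex^('p::enum)^'n \<Rightarrow> nat \<Rightarrow> complex^'n" where
  "colm M m = (\<chi> i. M$i$(sl m))"

definition gstep :: "complex^('p::enum)^'n \<Rightarrow> (complex^'n) list \<Rightarrow> nat \<Rightarrow> complex^'n" where
  "gstep M qs m = (let u = colm M m - (\<Sum>j<length qs. ip (qs!j) (colm M m) *s (qs!j))
                   in (1 / complex_of_real (sqrt (Re (ip u u)))) *s u)"

primrec gsl :: "complex^('p::enum)^'n \<Rightarrow> nat \<Rightarrow> (complex^'n) list" where
  "gsl M 0 = []"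
| "gsl M (Suc m) = gsl M m @ [gstep M (gsl M m) m]"

lemma length_gsl[simp]: "length (gsl M m) = m"
  by (induction m) auto

definition gq :: "complex^('p::enum)^'n \<Rightarrow> nat \<Rightarrow> complex^'n" where
  "gq M m = gsl M (Suc m) ! m"

lemma gsl_nth: "j < m \<Longrightarrow> gsl M m ! j = gq M j"
proof (induction m)
  case 0 then show ?case by simp
next
  case (Suc m)
  then show ?case unfolding gq_def
    by (cases "j = m") (auto simp: nth_append less_Suc_eq)
qed

definition gu :: "complex^('p::enum)^'n \<Rightarrow> nat \<Rightarrow> complex^'n" where
  "gu M m = colm M m - (\<Sum>j<m. ip (gq M j) (colm M m) *s gq M j)"

definition gr :: "complex^('p::enum)^'n \<Rightarrow> nat \<Rightarrow> real" where
  "gr M m = sqrt (Re (ip (gu M m) (gu M m)))"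

lemma gq_eq: "gq M m = (1 / complex_of_real (gr M m)) *s gu M m"
proof -
  have "(\<Sum>j<m. ip (gsl M m ! j) (colm M m) *s gsl M m ! j) = (\<Sum>j<m. ip (gq M j) (colm M m) *s gq M j)"
    by (rule sum.cong) (auto simp: gsl_nth)
  then show ?thesis unfolding gq_def gr_def gu_def by (simp add: gstep_def Let_def nth_append)
qed

definition gs_ok :: "complex^('p::enum)^'n \<Rightarrow> bool" where
  "gs_ok M \<longleftrightarrow> (\<forall>m<CARD('p). gu M m \<noteq> 0)"

lemma gr_pos: "gu M m \<noteq> 0 \<Longrightarrow> 0 < gr M m"
  by (simp add: gr_def ip_self_Re_pos)

lemma gu_eq: "gu M m \<noteq> 0 \<Longrightarrow> gu M m = complex_of_real (gr M m) *s gq M m"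
  using gr_pos[of M m] by (simp add: gq_eq vector_smult_assoc)

lemma ip_u_u: "ip (gu M m) (gu M m) = complex_of_real ((gr M m)^2)"
proof -
  have "Im (ip (gu M m) (gu M m)) = 0" by (simp add: ip_self)
  moreover have "0 \<le> Re (ip (gu M m) (gu M m))" by (simp add: ip_self sum_nonneg)
  ultimately show ?thesis by (simp add: gr_def complex_eq_iff)
qed


lemma ip_q_u:
  assumes orth: "\<And>i j. i < m \<Longrightarrow> j < m \<Longrightarrow> ip (gq M i) (gq M j) = (if i = j then 1 else 0)"
    and "j < m"
  shows "ip (gq M j) (gu M m) = 0"
proof -
  have "ip (gq M j) (gu M m) = ip (gq M j) (colm M m) - (\<Sum>j'<m. ip (gq M j') (colm M m) * ip (gq M j) (gq M j'))"
    by (simp add: gu_def ip_diff_right ip_sum_right ip_scale_right)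
  also have "(\<Sum>j'<m. ip (gq M j') (colm M m) * ip (gq M j) (gq M j')) = (\<Sum>j'<m. if j = j' then ip (gq M j') (colm M m) else 0)"
    by (rule sum.cong) (auto simp: orth assms(2))
  also have "\<dots> = ip (gq M j) (colm M m)" using assms(2) by simp
  finally show ?thesis by simp
qed

lemma gs_orth:
  fixes M :: "complex^('p::enum)^'n"
  assumes "gs_ok M"
  shows "m < CARD('p) \<Longrightarrow> i \<le> m \<Longrightarrow> j \<le> m \<Longrightarrow> ip (gq M i) (gq M j) = (if i = j then 1 else 0)"
proof (induction m arbitrary: i j)
  case 0
  then have "gu M 0 \<noteq> 0" using assms by (simp add: gs_ok_def)
  then have "gr M 0 \<noteq> 0" using gr_pos by force
  with 0 show ?case
    by (simp add: gq_eq ip_scale_left ip_scale_right ip_u_u power2_eq_square)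
next
  case (Suc m)
  have IH: "\<And>i j. i < Suc m \<Longrightarrow> j < Suc m \<Longrightarrow> ip (gq M i) (gq M j) = (if i = j then 1 else 0)"
    using Suc by simp
  have ok: "gu M (Suc m) \<noteq> 0" using assms Suc.prems by (simp add: gs_ok_def)
  then have r: "gr M (Suc m) \<noteq> 0" using gr_pos by force
  have a: "ip (gq M j') (gq M (Suc m)) = 0" if "j' < Suc m" for j'
    using ip_q_u[OF IH that] by (simp add: gq_eq ip_scale_right)
  have b: "ip (gq M (Suc m)) (gq M j') = 0" if "j' < Suc m" for j'
    using a[OF that] by (metis ip_cnj complex_cnj_zero)
  have c: "ip (gq M (Suc m)) (gq M (Suc m)) = 1"
    using r by (simp add: gq_eq ip_scale_left ip_scale_right ip_u_u power2_eq_square)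
  show ?case
  proof (cases "i = Suc m")
    case True
    then show ?thesis using b c Suc.prems by (cases "j = Suc m") auto
  next
    case False
    then show ?thesis using a IH Suc.prems by (cases "j = Suc m") auto
  qed
qed

lemma gs_orth':
  fixes M :: "complex^('p::enum)^'n"
  assumes "gs_ok M" "i < CARD('p)" "j < CARD('p)"
  shows "ip (gq M i) (gq M j) = (if i = j then 1 else 0)"
  using gs_orth[OF assms(1), of "max i j" i j] assms by (simp add: max_def)

lemma colm_split:
  fixes M :: "complex^('p::enum)^'n"
  assumes "gs_ok M" "m < CARD('p)"
  shows "colm M m = complex_of_real (gr M m) *s gq M m + (\<Sum>j<m. ip (gq M j) (colm M m) *s gq M j)"
proof -
  have "gu M m \<noteq> 0" using assms by (simp add: gs_ok_def)
  then show ?thesis using gu_eq[of M m] unfolding gu_def by (simp add: diff_eq_eq)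
qed

lemma ip_q_col:
  fixes M :: "complex^('p::enum)^'n"
  assumes ok: "gs_ok M" and m: "m < CARD('p)" and j: "j < CARD('p)" and jm: "m \<le> j"
  shows "ip (gq M j) (colm M m) = (if j = m then complex_of_real (gr M m) else 0)"
proof -
  have "ip (gq M j) (colm M m) = complex_of_real (gr M m) * ip (gq M j) (gq M m) + (\<Sum>j'<m. ip (gq M j') (colm M m) * ip (gq M j) (gq M j'))"
    by (subst colm_split[OF ok m]) (simp add: ip_add_right ip_sum_right ip_scale_right)
  also have "(\<Sum>j'<m. ip (gq M j') (colm M m) * ip (gq M j) (gq M j')) = 0"
    by (rule sum.neutral) (use m j jm in \<open>auto simp: gs_orth'[OF ok]\<close>)
  finally show ?thesis using m j jm by (simp add: gs_orth'[OF ok])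
qed

lemma colm_full:
  fixes M :: "complex^('p::enum)^'n"
  assumes ok: "gs_ok M" and m: "m < CARD('p)"
  shows "colm M m = (\<Sum>j<CARD('p). ip (gq M j) (colm M m) *s gq M j)"
proof -
  have "(\<Sum>j<CARD('p). ip (gq M j) (colm M m) *s gq M j) = (\<Sum>j\<in>{..<m} \<union> {m..<CARD('p)}. ip (gq M j) (colm M m) *s gq M j)"
    using m by (intro sum.cong) auto
  also have "\<dots> = (\<Sum>j<m. ip (gq M j) (colm M m) *s gq M j) + (\<Sum>j\<in>{m..<CARD('p)}. ip (gq M j) (colm M m) *s gq M j)"
    by (rule sum.union_disjoint) auto
  also have "(\<Sum>j\<in>{m..<CARD('p)}. ip (gq M j) (colm M m) *s gq M j) = (\<Sum>j\<in>{m..<CARD('p)}. if j = m then complex_of_real (gr M m) *s gq M m else 0)"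
    by (rule sum.cong) (auto simp: ip_q_col[OF ok m])
  also have "\<dots> = complex_of_real (gr M m) *s gq M m" using m by simp
  finally show ?thesis using colm_split[OF ok m] by (simp add: add.commute)
qed

definition hh :: "complex^'p^'n \<Rightarrow> complex^'q^'n \<Rightarrow> complex^'q^'p" where
  "hh A B = (\<chi> a b. \<Sum>i\<in>UNIV. cnj (A$i$a) * B$i$b)"

definition gsQ :: "complex^('p::enum)^'n \<Rightarrow> complex^('p::enum)^'n" where
  "gsQ M = (\<chi> i c. gq M (ix c) $ i)"

lemma colm_ix: "colm M (ix c) = (\<chi> i. M$i$c)"
  by (simp add: colm_def)

lemma hh_gsQ_M: "hh (gsQ M) M $ a $ c = ip (gq M (ix a)) (colm M (ix c))"
  by (simp add: hh_def gsQ_def ip_def colm_def)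

definition upper_pos :: "complex^('p::enum)^('p::enum) \<Rightarrow> bool" where
  "upper_pos R \<longleftrightarrow> (\<forall>i j. ix j < ix i \<longrightarrow> R$i$j = 0) \<and> (\<forall>i. Im (R$i$i) = 0 \<and> Re (R$i$i) > 0)"

lemma gs_unitary:
  fixes M :: "complex^('p::enum)^'n"
  assumes ok: "gs_ok M"
  shows "hh (gsQ M) (gsQ M) = mat 1"
proof -
  have "hh (gsQ M) (gsQ M) $ a $ b = ip (gq M (ix a)) (gq M (ix b))" for a b
    by (simp add: hh_def gsQ_def ip_def)
  then show ?thesis by (simp add: vec_eq_iff mat_def gs_orth'[OF ok] ix_inj)
qed

lemma gs_upper:
  fixes M :: "complex^('p::enum)^'n"
  assumes ok: "gs_ok M"
  shows "upper_pos (hh (gsQ M) M)"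
proof -
  have 1: "hh (gsQ M) M $ a $ c = 0" if "ix c < ix a" for a c
    using that ip_q_col[OF ok, of "ix c" "ix a"] by (simp add: hh_gsQ_M)
  have 2: "hh (gsQ M) M $ a $ a = complex_of_real (gr M (ix a))" for a
    using ip_q_col[OF ok, of "ix a" "ix a"] by (simp add: hh_gsQ_M)
  have 3: "gr M (ix a) > 0" for a :: 'p
    using ok by (simp add: gs_ok_def gr_pos)
  show ?thesis unfolding upper_pos_def using 1 2 3 by simp
qed

lemma gs_decomp:
  fixes M :: "complex^('p::enum)^'n"
  assumes ok: "gs_ok M"
  shows "gsQ M ** hh (gsQ M) M = M"
proof -
  have "(gsQ M ** hh (gsQ M) M) $ i $ c = M $ i $ c" for i c
  proof -
    have "(gsQ M ** hh (gsQ M) M) $ i $ c = (\<Sum>a::'p\<in>UNIV. gq M (ix a) $ i * ip (gq M (ix a)) (colm M (ix c)))"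
      by (simp add: matrix_matrix_mult_def hh_gsQ_M) (simp add: gsQ_def)
    also have "\<dots> = (\<Sum>j<CARD('p). gq M j $ i * ip (gq M j) (colm M (ix c)))"
      by (simp add: sum_l)
    also have "\<dots> = (\<Sum>j<CARD('p). ip (gq M j) (colm M (ix c)) *s gq M j) $ i"
      by (simp add: sum_component mult.commute)
    also have "\<dots> = colm M (ix c) $ i" using colm_full[OF ok, of "ix c"] by simp
    finally show ?thesis by (simp add: colm_ix)
  qed
  then show ?thesis by (simp add: vec_eq_iff)
qed

lemma sum_split3:
  fixes f :: "nat \<Rightarrow> 'a::comm_monoid_add"
  assumes "m < P"
  shows "(\<Sum>j<P. f j) = (\<Sum>j<m. f j) + f m + (\<Sum>j\<in>{Suc m..<P}. f j)"
proof -
  have "{..<P} = {..<m} \<union> {m} \<union> {Suc m..<P}" using assms by auto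
  then have "(\<Sum>j<P. f j) = (\<Sum>j\<in>{..<m} \<union> {m} \<union> {Suc m..<P}. f j)" by simp
  also have "\<dots> = (\<Sum>j\<in>{..<m} \<union> {m}. f j) + (\<Sum>j\<in>{Suc m..<P}. f j)"
    by (rule sum.union_disjoint) auto
  also have "(\<Sum>j\<in>{..<m} \<union> {m}. f j) = (\<Sum>j<m. f j) + f m"
    by (subst sum.union_disjoint) auto
  finally show ?thesis .
qed

lemma gs_unique:
  fixes M Q :: "complex^('p::enum)^'n" and R :: "complex^('p::enum)^('p::enum)"
  assumes QQ: "hh Q Q = mat 1" and R: "upper_pos R" and MQR: "M = Q ** R"
  shows "gs_ok M \<and> gsQ M = Q"
proof -
  let ?P = "CARD('p)"
  have orthQ: "ip (colm Q a) (colm Q b) = (if a = b then 1 else 0)" if "a < ?P" "b < ?P" for a b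
  proof -
    have "ip (colm Q a) (colm Q b) = hh Q Q $ sl a $ sl b" by (simp add: hh_def ip_def colm_def)
    also have "\<dots> = (if a = b then 1 else 0)" using that
      by (simp add: QQ mat_def) (metis ix_sl mod_less)
    finally show ?thesis .
  qed
  have colM: "colm M m = (\<Sum>j<?P. R$(sl j)$(sl m) *s colm Q j)" for m
  proof -
    have "colm M m $ i = (\<Sum>j<?P. R$(sl j)$(sl m) *s colm Q j) $ i" for i
      by (simp add: MQR colm_def matrix_matrix_mult_def sum_component sum_l mult.commute)
    then show ?thesis by (simp add: vec_eq_iff)
  qed
  have Rdiag: "R$(sl m)$(sl m) = complex_of_real (Re (R$(sl m)$(sl m))) \<and> Re (R$(sl m)$(sl m)) > 0" for m
    using R unfolding upper_pos_def by (simp add: complex_eq_iff)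
  have Rup: "R$(sl j)$(sl m) = 0" if "m < j" "j < ?P" for j m
  proof -
    have "m mod ?P < j" using that by (meson le_less_trans mod_le_divisor card_pos mod_less_eq_dividend)
    then show ?thesis using R that unfolding upper_pos_def by simp
  qed
  have main: "m < ?P \<Longrightarrow> gu M m \<noteq> 0 \<and> gq M m = colm Q m" for m
  proof (induction m rule: less_induct)
    case (less m)
    define r where "r = Re (R$(sl m)$(sl m))"
    have r: "R$(sl m)$(sl m) = complex_of_real r" "r > 0" using Rdiag[of m] by (auto simp: r_def)
    have ipc: "ip (gq M j) (colm M m) = R$(sl j)$(sl m)" if "j < m" for j
    proof -
      have "ip (gq M j) (colm M m) = (\<Sum>j'<?P. R$(sl j')$(sl m) * ip (colm Q j) (colm Q j'))"
        using less.IH[of j] that less.prems by (simp add: colM ip_sum_right ip_scale_right)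
      also have "\<dots> = (\<Sum>j'<?P. if j = j' then R$(sl j')$(sl m) else 0)"
        by (rule sum.cong) (use that less.prems in \<open>auto simp: orthQ\<close>)
      also have "\<dots> = R$(sl j)$(sl m)" using that less.prems by simp
      finally show ?thesis .
    qed
    have "gu M m = colm M m - (\<Sum>j<m. R$(sl j)$(sl m) *s colm Q j)"
      unfolding gu_def using less.IH less.prems ipc by (intro arg_cong2[where f=minus] sum.cong) auto
    also have "colm M m = (\<Sum>j<m. R$(sl j)$(sl m) *s colm Q j) + R$(sl m)$(sl m) *s colm Q m"
      using less.prems by (simp add: colM sum_split3[OF less.prems] Rup)
    finally have gu: "gu M m = complex_of_real r *s colm Q m" by (simp add: r)
    have q1: "ip (colm Q m) (colm Q m) = 1" using orthQ less.prems by simp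
    have "ip (gu M m) (gu M m) = complex_of_real (r^2)"
      by (simp add: gu ip_scale_left ip_scale_right q1 power2_eq_square)
    then have gr: "gr M m = r" using r by (simp add: gr_def)
    have "colm Q m \<noteq> 0" using q1 by (auto simp: ip_def)
    then have "gu M m \<noteq> 0" using gu r by (auto simp: vec_eq_iff)
    moreover have "gq M m = colm Q m" using r by (simp add: gq_eq gr gu vector_smult_assoc)
    ultimately show ?case by simp
  qed
  have "gs_ok M" using main by (simp add: gs_ok_def)
  moreover have "gsQ M = Q" using main by (simp add: gsQ_def vec_eq_iff colm_ix)
  ultimately show ?thesis by simp
qed

lemma mv_diff: "M *v (a - b) = M *v a - M *v (b :: 'a::comm_ring_1^'p)"
  by (simp add: matrix_vector_mult_def vec_eq_iff sum_subtractf algebra_simps)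

lemma mv_scale: "M *v (c *s v) = c *s (M *v (v :: 'a::comm_ring_1^'p))"
  by (simp add: matrix_vector_mult_def vec_eq_iff sum_distrib_left algebra_simps)

lemma mv_sum: "M *v (\<Sum>j\<in>S. f j) = (\<Sum>j\<in>S. M *v (f j :: 'a::comm_ring_1^'p))"
  apply (simp add: matrix_vector_mult_def vec_eq_iff sum_component sum_distrib_left)
  apply (rule allI) apply (rule sum.swap) done

lemma sum_if_mult: "(\<Sum>j\<in>UNIV. f j * (if j = c then 1 else 0)) = (f c :: 'a::comm_ring_1)" for c :: "'i::finite"
proof -
  have "(\<Sum>j\<in>UNIV. f j * (if j = c then 1 else 0)) = (\<Sum>j\<in>UNIV. if j = c then f j else 0)"
    by (rule sum.cong) auto
  then show ?thesis by simp
qed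

lemma colm_mv: "colm M m = M *v axis (sl m) 1"
  by (simp add: colm_def matrix_vector_mult_def vec_eq_iff axis_def sum_if_mult)

lemma gs_ok_inj:
  fixes M :: "complex^('p::enum)^'n"
  assumes inj: "inj ((*v) M)"
  shows "gs_ok M"
proof -
  let ?P = "CARD('p)"
  have C: "m < ?P \<Longrightarrow> (\<forall>j<m. gu M j \<noteq> 0) \<Longrightarrow> \<exists>z. (\<forall>c. m < ix c \<longrightarrow> z$c = 0) \<and> gu M m = M *v z \<and> z$(sl m) = 1" for m
  proof (induction m rule: less_induct)
    case (less m)
    have "\<forall>j<m. \<exists>z. (\<forall>c. j < ix c \<longrightarrow> z$c = 0) \<and> gu M j = M *v z \<and> z$(sl j) = 1"
      using less by auto
    then obtain Z where Z: "\<And>j. j < m \<Longrightarrow> (\<forall>c. j < ix c \<longrightarrow> Z j$c = 0) \<and> gu M j = M *v Z j"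
      by metis
    have guZ: "gu M j = M *v Z j" if "j < m" for j
      using Z[OF that] by simp
    define z where "z = axis (sl m) 1 - (\<Sum>j<m. ip (gq M j) (colm M m) *s ((1 / complex_of_real (gr M j)) *s Z j))"
    have "M *v z = gu M m"
      unfolding z_def gu_def mv_diff mv_sum mv_scale colm_mv[symmetric]
      by (intro arg_cong2[where f=minus] refl sum.cong) (auto simp: gq_eq guZ)
    moreover have "z$c = 0" if "m < ix c" for c
    proof -
      have "c \<noteq> sl m" using that less.prems by auto
      moreover have "Z j $ c = 0" if "j < m" for j using Z[OF that] \<open>m < ix c\<close> that by auto
      ultimately show ?thesis by (simp add: z_def sum_component axis_def)
    qed
    moreover have "z$(sl m) = 1"
    proof -
      have "Z j $ (sl m) = 0" if "j < m" for j using Z[OF that] that less.prems by auto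
      then show ?thesis by (simp add: z_def sum_component axis_def)
    qed
    ultimately show ?case by metis
  qed
  show ?thesis unfolding gs_ok_def
  proof (rule ccontr)
    assume "\<not> (\<forall>m<?P. gu M m \<noteq> 0)"
    then have ex: "\<exists>m. m < ?P \<and> gu M m = 0" by auto
    define m where "m = (LEAST m. m < ?P \<and> gu M m = 0)"
    have m: "m < ?P" "gu M m = 0" using LeastI_ex[OF ex] by (auto simp: m_def)
    have "\<forall>j<m. gu M j \<noteq> 0"
    proof (intro allI impI)
      fix j assume "j < m"
      then have "\<not> (j < ?P \<and> gu M j = 0)" unfolding m_def by (rule not_less_Least)
      then show "gu M j \<noteq> 0" using \<open>j < m\<close> m(1) by auto
    qed
    from C[OF m(1) this] obtain z where z: "gu M m = M *v z" "z$(sl m) = 1" by blast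
    then have "M *v z = M *v 0" using m by simp
    then have "z = 0" using inj by (rule injD[rotated])
    then show False using z by simp
  qed
qed

definition mcnj :: "complex^'p^'n \<Rightarrow> complex^'p^'n" where
  "mcnj M = (\<chi> i j. cnj (M$i$j))"

lemma mcnj_mult: "mcnj (A ** B) = mcnj A ** mcnj B"
  by (simp add: mcnj_def matrix_matrix_mult_def vec_eq_iff)

lemma mcnj_hh: "hh (mcnj A) (mcnj B) = mcnj (hh A B)"
  by (simp add: mcnj_def hh_def vec_eq_iff)

lemma mcnj_mat1: "mcnj (mat 1) = mat 1"
  by (simp add: mcnj_def mat_def vec_eq_iff)

lemma upper_pos_mcnj: "upper_pos R \<Longrightarrow> upper_pos (mcnj R)"
  by (simp add: upper_pos_def mcnj_def)

lemma gs_mcnj: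
  fixes M :: "complex^('p::enum)^'n"
  assumes ok: "gs_ok M"
  shows "gsQ (mcnj M) = mcnj (gsQ M)"
proof -
  have "mcnj M = mcnj (gsQ M) ** mcnj (hh (gsQ M) M)" using gs_decomp[OF ok] mcnj_mult by metis
  moreover have "hh (mcnj (gsQ M)) (mcnj (gsQ M)) = mat 1" by (simp add: mcnj_hh gs_unitary[OF ok] mcnj_mat1)
  moreover have "upper_pos (mcnj (hh (gsQ M) M))" by (rule upper_pos_mcnj[OF gs_upper[OF ok]])
  ultimately show ?thesis using gs_unique by blast
qed


abbreviation hat :: "real^('l::enum)^'p^'n \<Rightarrow> 'l \<Rightarrow> complex^'p^'n" where
  "hat A k \<equiv> fslice (dft A) k"

lemma hat_tprod: "hat (A \<star> B) k = hat A k ** hat B k"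
  for A :: "real^('l::enum)^'p^'n" and B :: "real^('l::enum)^'q^'p"
  by (simp add: fslice_def matrix_matrix_mult_def vec_eq_iff dft_tprod)

lemma hat_ttrans_tprod: "hat (ttrans A \<star> B) k = hh (hat A k) (hat B k)"
  for A :: "real^('l::enum)^'p^'n" and B :: "real^('l::enum)^'q^'n"
  by (simp add: fslice_def hh_def vec_eq_iff dft_tprod dft_ttrans)

lemma hat_tid: "hat (tid :: real^('l::enum)^'p^'p) k = mat 1"
  by (simp add: fslice_def dft_tid mat_def vec_eq_iff)

lemma hat_eq_iff: "(\<forall>k. hat A k = hat B k) \<longleftrightarrow> A = B"
  for A B :: "real^('l::enum)^'p^'n"
proof
  assume "\<forall>k. hat A k = hat B k"
  then have "dft A = dft B" by (simp add: fslice_def vec_eq_iff)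
  then show "A = B" by (rule dft_inj)
qed simp

lemma stiefel_iff: "X \<in> stiefel \<longleftrightarrow> (\<forall>k. hh (hat X k) (hat X k) = mat 1)"
  for X :: "real^('l::enum)^'p^'n"
  unfolding stiefel_def using hat_eq_iff[of "ttrans X \<star> X" tid]
  by (simp add: hat_ttrans_tprod hat_tid)

lemma Cupp_pos_iff: "C \<in> Cupp_pos \<longleftrightarrow> (\<forall>k. upper_pos (fslice C k))"
  by (auto simp: Cupp_pos_def upper_pos_def fslice_def)

lemma hat_neg: "hat A (neg k) = mcnj (hat A k)"
  for A :: "real^('l::enum)^'p^'n"
  by (simp add: fslice_def mcnj_def vec_eq_iff dft_neg)

definition Q0 :: "real^('l::enum)^('p::enum)^'n \<Rightarrow> real^('l::enum)^('p::enum)^'n" where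
  "Q0 A = idft (\<chi> i j k. gsQ (hat A k) $i$j)"

lemma dft_Q0:
  fixes A :: "real^('l::enum)^('p::enum)^'n"
  assumes ok: "\<forall>k. gs_ok (hat A k)"
  shows "hat (Q0 A) k = gsQ (hat A k)"
proof -
  have "csym (\<chi> i j k. gsQ (hat A k) $i$j)"
    unfolding csym_def using ok by (simp add: hat_neg gs_mcnj) (simp add: mcnj_def)
  then have "dft (Q0 A) = (\<chi> i j k. gsQ (hat A k) $i$j)" unfolding Q0_def by (rule dft_idft)
  then show ?thesis by (simp add: fslice_def vec_eq_iff)
qed

lemma qf_Q0:
  fixes A :: "real^('l::enum)^('p::enum)^'n"
  assumes ok: "\<forall>k. gs_ok (hat A k)"
  shows "Q0 A \<in> stiefel" and "qf A = Q0 A"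
proof -
  note hQ = dft_Q0[OF ok]
  show st: "Q0 A \<in> stiefel" unfolding stiefel_iff using ok by (simp add: hQ gs_unitary)
  define R where "R = ttrans (Q0 A) \<star> A"
  have hR: "hat R k = hh (gsQ (hat A k)) (hat A k)" for k
    by (simp add: R_def hat_ttrans_tprod hQ)
  have Rup: "dft R \<in> Cupp_pos" unfolding Cupp_pos_iff using ok by (simp add: hR gs_upper)
  have AQR: "A = Q0 A \<star> R"
    unfolding hat_eq_iff[symmetric] using ok by (simp add: hat_tprod hR hQ gs_decomp)
  have uniq: "Q = Q0 A" if "Q \<in> stiefel" "dft R' \<in> Cupp_pos" "A = Q \<star> R'" for Q R'
  proof -
    have "hat Q k = hat (Q0 A) k" for k
    proof -
      have "hh (hat Q k) (hat Q k) = mat 1" using that(1) by (simp add: stiefel_iff)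
      moreover have "upper_pos (hat R' k)" using that(2) by (simp add: Cupp_pos_iff)
      moreover have "hat A k = hat Q k ** hat R' k" using that(3) by (simp add: hat_tprod)
      ultimately have "gsQ (hat A k) = hat Q k" using gs_unique by blast
      then show ?thesis by (simp add: hQ)
    qed
    then show ?thesis using hat_eq_iff by blast
  qed
  show "qf A = Q0 A" unfolding qf_def
  proof (rule the_equality)
    show "Q0 A \<in> stiefel \<and> (\<exists>R. dft R \<in> Cupp_pos \<and> A = Q0 A \<star> R)" using st Rup AQR by blast
  qed (use uniq in blast)
qed

lemma qf_unique:
  fixes A Q :: "real^('l::enum)^('p::enum)^'n"
  assumes "Q \<in> stiefel" "dft R \<in> Cupp_pos" "A = Q \<star> R"
  shows "qf A = Q" and "\<forall>k. gs_ok (hat A k)"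
proof -
  have *: "gs_ok (hat A k) \<and> gsQ (hat A k) = hat Q k" for k
  proof -
    have "hh (hat Q k) (hat Q k) = mat 1" using assms(1) by (simp add: stiefel_iff)
    moreover have "upper_pos (hat R k)" using assms(2) by (simp add: Cupp_pos_iff)
    moreover have "hat A k = hat Q k ** hat R k" using assms(3) by (simp add: hat_tprod)
    ultimately show ?thesis using gs_unique by blast
  qed
  then show ok: "\<forall>k. gs_ok (hat A k)" by blast
  have "hat (Q0 A) k = hat Q k" for k using * dft_Q0[OF ok] by simp
  then have "Q0 A = Q" using hat_eq_iff by blast
  then show "qf A = Q" using qf_Q0(2)[OF ok] by simp
qed


inductive sm :: "'a::real_normed_vector set \<Rightarrow> ('a \<Rightarrow> complex) \<Rightarrow> bool" for U where
  sm_const: "sm U (\<lambda>x. c)"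
| sm_lin: "bounded_linear f \<Longrightarrow> sm U (\<lambda>x. complex_of_real (f x))"
| sm_add: "sm U f \<Longrightarrow> sm U g \<Longrightarrow> sm U (\<lambda>x. f x + g x)"
| sm_mult: "sm U f \<Longrightarrow> sm U g \<Longrightarrow> sm U (\<lambda>x. f x * g x)"
| sm_cnj: "sm U f \<Longrightarrow> sm U (\<lambda>x. cnj (f x))"
| sm_Re: "sm U f \<Longrightarrow> sm U (\<lambda>x. complex_of_real (Re (f x)))"
| sm_inv: "sm U f \<Longrightarrow> (\<forall>x\<in>U. f x \<noteq> 0) \<Longrightarrow> sm U (\<lambda>x. inverse (f x))"
| sm_sqrt: "sm U f \<Longrightarrow> (\<forall>x\<in>U. Re (f x) > 0) \<Longrightarrow> sm U (\<lambda>x. complex_of_real (sqrt (Re (f x))))"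

lemma sm_eq: "sm U f \<Longrightarrow> f = g \<Longrightarrow> sm U g" by simp

lemma sm_minus: "sm U f \<Longrightarrow> sm U (\<lambda>x. - f x)"
  by (rule sm_eq[OF sm_mult[OF sm_const[of U "-1"]]]) auto

lemma sm_diff: "sm U f \<Longrightarrow> sm U g \<Longrightarrow> sm U (\<lambda>x. f x - g x)"
  by (rule sm_eq[OF sm_add[OF _ sm_minus]]) auto

lemma sm_sum: "finite S \<Longrightarrow> (\<And>j. j \<in> S \<Longrightarrow> sm U (f j)) \<Longrightarrow> sm U (\<lambda>x. \<Sum>j\<in>S. f j x)"
proof (induction S rule: finite_induct)
  case empty then show ?case using sm_const[of U 0] by simp
next
  case (insert a S)
  then show ?case by (simp add: sm_add)
qed

lemma sm_mono: "sm U f \<Longrightarrow> V \<subseteq> U \<Longrightarrow> sm V f"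
  by (induction rule: sm.induct) (auto intro: sm.intros)

lemma sm_deriv:
  "sm U f \<Longrightarrow> \<exists>D. (\<forall>x\<in>U. (f has_derivative D x) (at x)) \<and> (\<forall>h. sm U (\<lambda>x. D x h))"
proof (induction rule: sm.induct)
  case (sm_const c)
  show ?case by (rule exI[of _ "\<lambda>x h. 0"]) (auto intro: sm.sm_const)
next
  case (sm_lin f)
  have "bounded_linear (\<lambda>x. complex_of_real (f x))"
    using bounded_linear_compose[OF bounded_linear_of_real sm_lin] by simp
  then show ?case
    by (intro exI[of _ "\<lambda>x h. complex_of_real (f h)"]) (auto intro: sm.sm_const bounded_linear_imp_has_derivative)
next
  case (sm_add f g)
  then obtain Df Dg where f: "\<forall>x\<in>U. (f has_derivative Df x) (at x)" "\<forall>h. sm U (\<lambda>x. Df x h)"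
    and g: "\<forall>x\<in>U. (g has_derivative Dg x) (at x)" "\<forall>h. sm U (\<lambda>x. Dg x h)" by blast
  show ?case
    by (rule exI[of _ "\<lambda>x h. Df x h + Dg x h"]) (use f g in \<open>auto intro: has_derivative_add sm.sm_add\<close>)
next
  case (sm_mult f g)
  then obtain Df Dg where f: "\<forall>x\<in>U. (f has_derivative Df x) (at x)" "\<forall>h. sm U (\<lambda>x. Df x h)"
    and g: "\<forall>x\<in>U. (g has_derivative Dg x) (at x)" "\<forall>h. sm U (\<lambda>x. Dg x h)" by blast
  show ?case
    by (rule exI[of _ "\<lambda>x h. f x * Dg x h + Df x h * g x"])
      (use f g sm_mult.hyps in \<open>auto intro!: has_derivative_mult sm.sm_add sm.sm_mult\<close>)
next
  case (sm_cnj f)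
  then obtain Df where f: "\<forall>x\<in>U. (f has_derivative Df x) (at x)" "\<forall>h. sm U (\<lambda>x. Df x h)" by blast
  show ?case
    by (rule exI[of _ "\<lambda>x h. cnj (Df x h)"])
      (use f in \<open>auto intro: bounded_linear.has_derivative[OF bounded_linear_cnj] sm.sm_cnj\<close>)
next
  case (sm_Re f)
  then obtain Df where f: "\<forall>x\<in>U. (f has_derivative Df x) (at x)" "\<forall>h. sm U (\<lambda>x. Df x h)" by blast
  have bl: "bounded_linear (\<lambda>z. complex_of_real (Re z))"
    using bounded_linear_compose[OF bounded_linear_of_real bounded_linear_Re] by simp
  show ?case
    by (rule exI[of _ "\<lambda>x h. complex_of_real (Re (Df x h))"])
      (use f in \<open>auto intro: bounded_linear.has_derivative[OF bl] sm.sm_Re\<close>)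
next
  case (sm_inv f)
  then obtain Df where f: "\<forall>x\<in>U. (f has_derivative Df x) (at x)" "\<forall>h. sm U (\<lambda>x. Df x h)" by blast
  have "sm U (\<lambda>x. - (inverse (f x) * Df x h * inverse (f x)))" for h
    using f sm_inv by (intro sm_minus sm.sm_mult sm.sm_inv) auto
  then show ?case
    by (intro exI[of _ "\<lambda>x h. - (inverse (f x) * Df x h * inverse (f x))"]) (use f sm_inv in \<open>auto intro: has_derivative_inverse\<close>)
next
  case (sm_sqrt f)
  then obtain Df where f: "\<forall>x\<in>U. (f has_derivative Df x) (at x)" "\<forall>h. sm U (\<lambda>x. Df x h)" by blast
  define D where "D x h = complex_of_real (inverse (sqrt (Re (f x))) / 2 * Re (Df x h))" for x h
  have "((\<lambda>x. complex_of_real (sqrt (Re (f x)))) has_derivative D x) (at x)" if x: "x \<in> U" for x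
  proof -
    have 1: "((\<lambda>x. Re (f x)) has_derivative (\<lambda>h. Re (Df x h))) (at x)"
      using f x by (auto intro: bounded_linear.has_derivative[OF bounded_linear_Re])
    have 2: "(sqrt has_derivative (\<lambda>y. inverse (sqrt (Re (f x))) / 2 * y)) (at (Re (f x)))"
      using DERIV_real_sqrt[of "Re (f x)"] sm_sqrt.hyps x has_field_derivative_imp_has_derivative by blast
    have 3: "((\<lambda>x. sqrt (Re (f x))) has_derivative (\<lambda>h. inverse (sqrt (Re (f x))) / 2 * Re (Df x h))) (at x)"
      using has_derivative_compose[OF 1 2] by simp
    show ?thesis unfolding D_def
      by (rule bounded_linear.has_derivative[OF bounded_linear_of_real 3])
  qed
  moreover have "sm U (\<lambda>x. D x h)" for h
  proof -
    have "sm U (\<lambda>x. inverse (complex_of_real (sqrt (Re (f x)))) * complex_of_real (1/2) * complex_of_real (Re (Df x h)))"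
      using f sm_sqrt by (intro sm.sm_mult sm.sm_inv sm.sm_sqrt sm.sm_const sm.sm_Re) auto
    then show ?thesis by (rule sm_eq) (auto simp: D_def fun_eq_iff)
  qed
  ultimately show ?case by blast
qed

lemma sm_cont: "sm U f \<Longrightarrow> continuous_on U f"
proof -
  assume "sm U f"
  then obtain D where "\<forall>x\<in>U. (f has_derivative D x) (at x)" using sm_deriv by blast
  then show ?thesis
    by (meson continuous_at_imp_continuous_on has_derivative_continuous)
qed


definition smv :: "'a::real_normed_vector set \<Rightarrow> ('a \<Rightarrow> 'b::euclidean_space) \<Rightarrow> bool" where
  "smv U F \<longleftrightarrow> (\<forall>b\<in>Basis. sm U (\<lambda>x. complex_of_real (F x \<bullet> b)))"

lemma smv_deriv:
  assumes "smv U F"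
  shows "\<exists>DF. (\<forall>x\<in>U. (F has_derivative DF x) (at x)) \<and> (\<forall>h. smv U (\<lambda>x. DF x h))"
proof -
  have "\<forall>b\<in>Basis. \<exists>D. (\<forall>x\<in>U. ((\<lambda>x. complex_of_real (F x \<bullet> b)) has_derivative D x) (at x)) \<and> (\<forall>h. sm U (\<lambda>x. D x h))"
    using assms sm_deriv unfolding smv_def by blast
  then obtain D where D: "\<And>b. b \<in> Basis \<Longrightarrow> (\<forall>x\<in>U. ((\<lambda>x. complex_of_real (F x \<bullet> b)) has_derivative D b x) (at x)) \<and> (\<forall>h. sm U (\<lambda>x. D b x h))"
    by metis
  define DF where "DF x h = (\<Sum>b\<in>Basis. Re (D b x h) *\<^sub>R b)" for x h
  have "(F has_derivative DF x) (at x)" if x: "x \<in> U" for x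
  proof -
    have 1: "((\<lambda>x. F x \<bullet> b) has_derivative (\<lambda>h. Re (D b x h))) (at x)" if b: "b \<in> Basis" for b
      using bounded_linear.has_derivative[OF bounded_linear_Re, of "\<lambda>x. complex_of_real (F x \<bullet> b)" "D b x" "at x"] D[OF b] x
      by simp
    have "((\<lambda>x. \<Sum>b\<in>Basis. (F x \<bullet> b) *\<^sub>R b) has_derivative DF x) (at x)"
      unfolding DF_def by (intro has_derivative_sum has_derivative_scaleR_left 1)
    then show ?thesis by (simp add: euclidean_representation)
  qed
  moreover have "smv U (\<lambda>x. DF x h)" for h
    unfolding smv_def
  proof
    fix b :: 'b assume b: "b \<in> Basis"
    have "DF x h \<bullet> b = Re (D b x h)" for x
      using b by (simp add: DF_def inner_sum_left inner_Basis if_distrib cong: if_cong)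
    then show "sm U (\<lambda>x. complex_of_real (DF x h \<bullet> b))"
      using sm_Re[OF conjunct2[OF D[OF b], rule_format, of h]] by simp
  qed
  ultimately show ?thesis by blast
qed

lemma line_deriv:
  fixes G H :: "'a::real_normed_vector \<Rightarrow> 'b::real_normed_vector"
  assumes U: "open U" "x \<in> U" and G: "(G has_derivative DG) (at x)" and HG: "\<forall>y\<in>U. H y = G y"
  shows "((\<lambda>t. H (x + t *\<^sub>R v)) has_vector_derivative DG v) (at 0)"
proof -
  have l: "linear DG" using G by (rule has_derivative_linear)
  have 1: "((\<lambda>t. x + t *\<^sub>R v) has_derivative (\<lambda>t. t *\<^sub>R v)) (at 0)"
    by (auto intro!: derivative_eq_intros)
  have "((\<lambda>t. G (x + t *\<^sub>R v)) has_derivative (\<lambda>t. DG (t *\<^sub>R v))) (at 0)"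
    using has_derivative_compose[OF 1, of G DG] G by simp
  then have 2: "((\<lambda>t. G (x + t *\<^sub>R v)) has_vector_derivative DG v) (at 0)"
    unfolding has_vector_derivative_def using linear.scaleR[OF l] by simp
  have op: "open ((\<lambda>t. x + t *\<^sub>R v) -` U)"
    by (rule continuous_open_vimage[OF U(1)]) (auto intro!: continuous_intros)
  show ?thesis
    by (rule has_vector_derivative_transform_within_open[OF 2 op]) (use U HG in auto)
qed

lemma smv_iter:
  assumes U: "open U"
  shows "smv U F \<Longrightarrow> \<exists>G. smv U G \<and> (\<forall>x\<in>U. iter_dd vs F x = G x)"
proof (induction vs arbitrary: F)
  case Nil then show ?case by auto
next
  case (Cons v vs)
  then obtain G where G: "smv U G" "\<forall>x\<in>U. iter_dd vs F x = G x" by blast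
  obtain DG where DG: "\<forall>x\<in>U. (G has_derivative DG x) (at x)" "\<forall>h. smv U (\<lambda>x. DG x h)"
    using smv_deriv[OF G(1)] by blast
  have "iter_dd (v # vs) F x = DG x v" if x: "x \<in> U" for x
  proof -
    have "((\<lambda>t. iter_dd vs F (x + t *\<^sub>R v)) has_vector_derivative DG x v) (at 0)"
      using line_deriv[OF U x] DG(1) x G(2) by blast
    then show ?thesis by (simp add: dirderiv_def vector_derivative_at)
  qed
  then show ?case using DG(2) by blast
qed

lemma smv_smooth:
  fixes F :: "'a::euclidean_space \<Rightarrow> 'b::euclidean_space"
  assumes U: "open U" and F: "smv U F"
  shows "smooth_on U F"
  unfolding smooth_on_def
proof (intro conjI allI ballI)
  fix vs :: "'a list"
  obtain G where G: "smv U G" "\<forall>x\<in>U. iter_dd vs F x = G x" using smv_iter[OF U F] by blast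
  obtain DG where DG: "\<forall>x\<in>U. (G has_derivative DG x) (at x)" using smv_deriv[OF G(1)] by blast
  have "continuous_on U G"
    using DG by (meson continuous_at_imp_continuous_on has_derivative_continuous)
  then show "continuous_on U (iter_dd vs F)" using G(2) continuous_on_cong by blast
  fix v x assume x: "x \<in> U"
  show "(\<lambda>t. iter_dd vs F (x + t *\<^sub>R v)) differentiable (at 0)"
    using line_deriv[OF U x, of G "DG x" "iter_dd vs F" v] DG x G(2)
    unfolding has_vector_derivative_def differentiable_def by blast
qed (rule U)


definition Okall :: "('l \<Rightarrow> 'a \<Rightarrow> complex^('p::enum)^'n) \<Rightarrow> nat \<Rightarrow> 'a set" where
  "Okall Mf m = {z. \<forall>\<kappa>. \<forall>j<m. gu (Mf \<kappa> z) j \<noteq> 0}"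

lemma sm_ip:
  assumes "\<And>i. sm U (\<lambda>z. u z $ i)" "\<And>i. sm U (\<lambda>z. v z $ i)"
  shows "sm U (\<lambda>z. ip (u z) (v z))"
  unfolding ip_def using assms by (intro sm_sum sm_mult sm_cnj) auto

lemma gs_sm_open:
  fixes Mf :: "'l::finite \<Rightarrow> 'a::real_normed_vector \<Rightarrow> complex^('p::enum)^'n"
  assumes M: "\<And>\<kappa> i c. sm UNIV (\<lambda>z. Mf \<kappa> z $i$c)"
  shows "open (Okall Mf m) \<and> (\<forall>\<kappa>. \<forall>j<m. \<forall>i. sm (Okall Mf m) (\<lambda>z. gq (Mf \<kappa> z) j $ i))"
proof (induction m)
  case 0
  show ?case by (simp add: Okall_def)
next
  case (Suc m)
  let ?O = "Okall Mf m" and ?O' = "Okall Mf (Suc m)"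
  have sub: "?O' \<subseteq> ?O" by (auto simp: Okall_def)
  have colsm: "sm ?O (\<lambda>z. colm (Mf \<kappa> z) m $ i)" for \<kappa> i
    unfolding colm_def using sm_mono[OF M] by simp
  have gusm: "sm ?O (\<lambda>z. gu (Mf \<kappa> z) m $ i)" for \<kappa> i
  proof -
    have "sm ?O (\<lambda>z. colm (Mf \<kappa> z) m $ i - (\<Sum>j<m. ip (gq (Mf \<kappa> z) j) (colm (Mf \<kappa> z) m) * gq (Mf \<kappa> z) j $ i))"
      using Suc.IH colsm by (intro sm_diff sm_sum sm_mult sm_ip) auto
    then show ?thesis by (simp add: gu_def sum_component)
  qed
  have cont: "continuous_on ?O (\<lambda>z. gu (Mf \<kappa> z) m)" for \<kappa>
  proof -
    have "continuous_on ?O (\<lambda>z. \<chi> i. gu (Mf \<kappa> z) m $ i)"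
      by (intro continuous_on_vec_lambda sm_cont gusm)
    then show ?thesis by simp
  qed
  have eq: "?O' = (\<Inter>\<kappa>\<in>UNIV. (\<lambda>z. gu (Mf \<kappa> z) m) -` (- {0}) \<inter> ?O)"
    by (auto simp: Okall_def less_Suc_eq)
  have "open ((\<lambda>z. gu (Mf \<kappa> z) m) -` (- {0}) \<inter> ?O)" for \<kappa>
    using Suc.IH cont[of \<kappa>] continuous_on_open_vimage[of ?O "\<lambda>z. gu (Mf \<kappa> z) m"]
    by (simp add: open_Compl)
  then have "open ?O'" unfolding eq by (intro open_INT) auto
  moreover have "sm ?O' (\<lambda>z. gq (Mf \<kappa> z) j $ i)" if j: "j < Suc m" for \<kappa> j i
  proof (cases "j < m")
    case True then show ?thesis using Suc.IH sm_mono[OF _ sub] by blast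
  next
    case False
    then have jm: "j = m" using j by simp
    have pos: "\<forall>z\<in>?O'. 0 < Re (ip (gu (Mf \<kappa> z) m) (gu (Mf \<kappa> z) m))"
      by (auto simp: Okall_def ip_self_Re_pos)
    have "sm ?O' (\<lambda>z. inverse (complex_of_real (sqrt (Re (ip (gu (Mf \<kappa> z) m) (gu (Mf \<kappa> z) m))))) * gu (Mf \<kappa> z) m $ i)"
    proof (intro sm_mult sm_inv sm_sqrt sm_ip)
      show "sm ?O' (\<lambda>z. gu (Mf \<kappa> z) m $ i')" for i' using sm_mono[OF gusm sub] .
      then show "sm ?O' (\<lambda>z. gu (Mf \<kappa> z) m $ i')" for i' .
      show "\<forall>z\<in>?O'. 0 < Re (ip (gu (Mf \<kappa> z) m) (gu (Mf \<kappa> z) m))" by (rule pos)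
      show "\<forall>z\<in>?O'. complex_of_real (sqrt (Re (ip (gu (Mf \<kappa> z) m) (gu (Mf \<kappa> z) m)))) \<noteq> 0"
        using pos by auto
      show "sm ?O' (\<lambda>z. gu (Mf \<kappa> z) m $ i)" using sm_mono[OF gusm sub] .
    qed
    then show ?thesis by (simp add: jm gq_eq gr_def divide_inverse)
  qed
  ultimately show ?case by blast
qed

lemma tensor_basis:
  assumes "b \<in> (Basis :: (real^'l^'p^'n) set)"
  shows "\<exists>i j k. \<forall>x::real^'l^'p^'n. x \<bullet> b = x$i$j$k"
proof -
  from assms obtain i u where b: "b = axis i u" "u \<in> (Basis :: (real^'l^'p) set)"
    unfolding Basis_vec_def by auto
  from b(2) obtain j u' where u: "u = axis j u'" "u' \<in> (Basis :: (real^'l) set)"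
    unfolding Basis_vec_def by auto
  from u(2) obtain k r where u': "u' = axis k r" "r \<in> (Basis :: real set)"
    unfolding Basis_vec_def by auto
  have "r = 1" using u'(2) by simp
  then have "x \<bullet> b = x$i$j$k" for x :: "real^'l^'p^'n"
    by (simp add: b u u' inner_axis)
  then show ?thesis by blast
qed

lemma smv_tensor:
  fixes F :: "'a::real_normed_vector \<Rightarrow> real^'l^'p^'n"
  assumes "\<And>i j k. sm U (\<lambda>z. complex_of_real (F z $i$j$k))"
  shows "smv U F"
  unfolding smv_def
proof
  fix b :: "real^'l^'p^'n" assume "b \<in> Basis"
  then obtain i j k where "\<forall>x::real^'l^'p^'n. x \<bullet> b = x$i$j$k" using tensor_basis by blast
  then show "sm U (\<lambda>x. complex_of_real (F x \<bullet> b))" using assms by simp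
qed


lemma deriv_eq_on_open:
  fixes f g :: "real \<Rightarrow> 'b::real_normed_vector"
  assumes "open T" "t0 \<in> T" "\<forall>t\<in>T. f t = g t"
    and "(f has_vector_derivative f') (at t0)" "(g has_vector_derivative g') (at t0)"
  shows "f' = g'"
proof -
  have "(g has_vector_derivative f') (at t0)"
    by (rule has_vector_derivative_transform_within_open[OF assms(4,1,2)]) (use assms(3) in auto)
  then show ?thesis using assms(5) vector_derivative_unique_at by blast
qed

lemma hat_deriv:
  fixes \<gamma> :: "real \<Rightarrow> real^('l::enum)^'p^'n"
  assumes "(\<gamma> has_vector_derivative V) (at t0)"
  shows "((\<lambda>t. hat (\<gamma> t) \<kappa> $i$a) has_vector_derivative hat V \<kappa> $i$a) (at t0)"
proof -
  have bl: "bounded_linear (\<lambda>x::real^('l::enum)^'p^'n. complex_of_real (x$i$a$k))" for k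
  proof -
    have "bounded_linear (\<lambda>x::real^('l::enum)^'p^'n. x$i$a$k)"
      by (rule bounded_linear_compose[OF bounded_linear_vec_nth], rule bounded_linear_compose[OF bounded_linear_vec_nth], rule bounded_linear_vec_nth)
    then show ?thesis using bounded_linear_compose[OF bounded_linear_of_real] by blast
  qed
  have "((\<lambda>t. complex_of_real (\<gamma> t $i$a$k)) has_vector_derivative complex_of_real (V$i$a$k)) (at t0)" for k
    using bounded_linear.has_vector_derivative[OF bl assms] by simp
  then show ?thesis
    by (simp add: fslice_def dft_nth) (intro has_vector_derivative_sum has_vector_derivative_mult_right)
qed

lemma hh_deriv:
  fixes g h :: "real \<Rightarrow> complex^'p^'n"
  assumes "\<And>i a. ((\<lambda>t. g t $i$a) has_vector_derivative g' $i$a) (at t0)"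
    and "\<And>i b. ((\<lambda>t. h t $i$b) has_vector_derivative h' $i$b) (at t0)"
  shows "((\<lambda>t. hh (g t) (h t) $a$b) has_vector_derivative (hh (g t0) h' $a$b + hh g' (h t0) $a$b)) (at t0)"
proof -
  have "((\<lambda>t. \<Sum>i\<in>UNIV. cnj (g t $i$a) * h t $i$b) has_vector_derivative
      (\<Sum>i\<in>UNIV. cnj (g t0 $i$a) * h' $i$b + cnj (g' $i$a) * h t0 $i$b)) (at t0)"
    using assms by (intro has_vector_derivative_sum has_vector_derivative_mult has_vector_derivative_cnj) auto
  then show ?thesis by (simp add: hh_def sum.distrib)
qed

lemma mm_deriv:
  fixes g :: "real \<Rightarrow> complex^'p^'n" and h :: "real \<Rightarrow> complex^'q^'p"
  assumes "\<And>i a. ((\<lambda>t. g t $i$a) has_vector_derivative g' $i$a) (at t0)"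
    and "\<And>a b. ((\<lambda>t. h t $a$b) has_vector_derivative h' $a$b) (at t0)"
  shows "((\<lambda>t. (g t ** h t) $i$b) has_vector_derivative ((g t0 ** h') $i$b + (g' ** h t0) $i$b)) (at t0)"
proof -
  have "((\<lambda>t. \<Sum>a\<in>UNIV. g t $i$a * h t $a$b) has_vector_derivative
      (\<Sum>a\<in>UNIV. g t0 $i$a * h' $a$b + g' $i$a * h t0 $a$b)) (at t0)"
    using assms by (intro has_vector_derivative_sum has_vector_derivative_mult) auto
  then show ?thesis by (simp add: matrix_matrix_mult_def sum.distrib)
qed

lemma tangent_skew:
  fixes X V :: "real^('l::enum)^'p^'n"
  assumes X: "X \<in> stiefel" and V: "V \<in> tangent_space stiefel X"
  shows "hh (hat V \<kappa>) (hat X \<kappa>) + hh (hat X \<kappa>) (hat V \<kappa>) = 0"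
proof -
  obtain \<gamma> e where e: "e > 0" and \<gamma>: "\<forall>t\<in>{-e<..<e}. \<gamma> t \<in> stiefel" "\<gamma> 0 = X"
    "(\<gamma> has_vector_derivative V) (at 0)"
    using V unfolding tangent_space_def by blast
  have "hh (hat V \<kappa>) (hat X \<kappa>) $a$b + hh (hat X \<kappa>) (hat V \<kappa>) $a$b = 0" for a b
  proof -
    have d: "((\<lambda>t. hh (hat (\<gamma> t) \<kappa>) (hat (\<gamma> t) \<kappa>) $a$b) has_vector_derivative
        (hh (hat X \<kappa>) (hat V \<kappa>) $a$b + hh (hat V \<kappa>) (hat X \<kappa>) $a$b)) (at 0)"
      using hh_deriv[OF hat_deriv[OF \<gamma>(3)] hat_deriv[OF \<gamma>(3)]] \<gamma>(2) by simp
    have c: "\<forall>t\<in>{-e<..<e}. hh (hat (\<gamma> t) \<kappa>) (hat (\<gamma> t) \<kappa>) $a$b = mat 1 $a$b"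
      using \<gamma>(1) by (simp add: stiefel_iff)
    have "hh (hat X \<kappa>) (hat V \<kappa>) $a$b + hh (hat V \<kappa>) (hat X \<kappa>) $a$b = 0"
      by (rule deriv_eq_on_open[OF _ _ c d has_vector_derivative_const]) (use e in auto)
    then show ?thesis by (simp add: add.commute)
  qed
  then show ?thesis by (simp add: vec_eq_iff)
qed

lemma ip_mv: "ip (A *v z) (B *v z) = (\<Sum>a\<in>UNIV. \<Sum>b\<in>UNIV. cnj (z$a) * hh A B $a$b * z$b)"
  by (simp add: ip_def matrix_vector_mult_def hh_def sum_distrib_left sum_distrib_right mult_ac)
     (subst sum.swap, rule sum.cong[OF refl], subst sum.swap, simp add: sum_distrib_left sum_distrib_right mult_ac)

lemma skew_inj:
  fixes X V :: "complex^('p::finite)^'n"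
  assumes XX: "hh X X = mat 1" and sk: "hh V X + hh X V = 0"
  shows "inj ((*v) (X + V))"
proof -
  have ker: "z = 0" if z: "(X + V) *v z = 0" for z
  proof -
    let ?y = "X *v z" and ?v = "V *v z"
    have yv: "?y = - ?v" using z by (simp add: matrix_vector_mult_def vec_eq_iff sum.distrib algebra_simps eq_neg_iff_add_eq_0)
    have "ip ?y ?v + ip ?v ?y = (\<Sum>a\<in>UNIV. \<Sum>b\<in>UNIV. cnj (z$a) * (hh X V + hh V X) $a$b * z$b)"
      by (simp add: ip_mv sum.distrib[symmetric] algebra_simps)
    also have "\<dots> = 0" using sk by (simp add: add.commute)
    finally have "ip ?y ?v + ip ?v ?y = 0" .
    moreover have "ip ?y ?v = - ip ?v ?v" "ip ?v ?y = - ip ?v ?v" using yv by (simp_all add: ip_def sum_negf)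
    ultimately have "ip ?v ?v = 0" by simp
    then have "?v = 0" by (simp add: ip_self_zero)
    then have "?y = 0" using yv by simp
    have inner: "(\<Sum>b\<in>UNIV. cnj (z$a) * mat 1 $a$b * z$b) = cnj (z$a) * z$a" for a
    proof -
      have "(\<Sum>b\<in>UNIV. cnj (z$a) * mat 1 $a$b * z$b) = (\<Sum>b\<in>UNIV. if a = b then cnj (z$a) * z$b else 0)"
        by (rule sum.cong) (auto simp: mat_def)
      then show ?thesis by simp
    qed
    have "ip z z = ip ?y ?y"
      by (simp only: ip_mv XX inner) (simp add: ip_def)
    then have "ip z z = 0" using \<open>?y = 0\<close> by (simp add: ip_def)
    then show "z = 0" by (simp add: ip_self_zero)
  qed
  show ?thesis
  proof (rule injI)
    fix a b assume "(X + V) *v a = (X + V) *v b"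
    then have "(X + V) *v (a - b) = 0" by (simp add: mv_diff)
    then have "a - b = 0" by (rule ker)
    then show "a = b" by simp
  qed
qed

lemma inj_rank:
  fixes M :: "complex^('p::finite)^'n"
  assumes "inj ((*v) M)"
  shows "rank M = CARD('p)"
proof -
  obtain B where "B ** M = mat 1" using matrix_left_invertible_injective assms by blast
  then have "vec.span (rows M) = UNIV" using matrix_left_invertible_span_rows_gen by blast
  then have "vec.dim (rows M) = vec.dim (UNIV :: (complex^'p) set)" by (metis vec.dim_span)
  then show ?thesis using vec_dim_card[where 'a=complex and 'n='p] by (simp add: row_rank_def_gen)
qed


lemma cnj_hh: "cnj (hh A B $c$a) = hh B A $a$c"
  by (simp add: hh_def mult.commute)

lemma deriv_core:
  fixes Q :: "real \<Rightarrow> complex^('p::enum)^'n" and X V Q' :: "complex^('p::enum)^'n"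
  assumes T: "open T" "0 \<in> T"
    and Qd: "\<And>i a. ((\<lambda>t. Q t $i$a) has_vector_derivative Q'$i$a) (at 0)"
    and Q0: "Q 0 = X" and sk: "hh V X + hh X V = 0"
    and unit: "\<forall>t\<in>T. hh (Q t) (Q t) = mat 1"
    and up: "\<forall>t\<in>T. upper_pos (hh (Q t) (X + t *\<^sub>R V))"
    and dec: "\<forall>t\<in>T. Q t ** hh (Q t) (X + t *\<^sub>R V) = X + t *\<^sub>R V"
  shows "Q' = V"
proof -
  have XX: "hh X X = mat 1" using unit T Q0 by auto
  have Md: "((\<lambda>t. (X + t *\<^sub>R V)$i$c) has_vector_derivative V$i$c) (at 0)" for i c
  proof -
    have "((\<lambda>t. X$i$c + t *\<^sub>R V$i$c) has_vector_derivative V$i$c) (at 0)"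
      by (auto intro!: derivative_eq_intros)
    then show ?thesis by simp
  qed
  define R' where "R' = hh X V + hh Q' X"
  have Rd: "((\<lambda>t. hh (Q t) (X + t *\<^sub>R V) $a$c) has_vector_derivative R'$a$c) (at 0)" for a c
    using hh_deriv[OF Qd Md, of a c] by (simp add: Q0 R'_def)
  have unitd: "hh X Q' + hh Q' X = 0"
  proof -
    have "(hh X Q' + hh Q' X) $a$b = 0" for a b
    proof -
      have d: "((\<lambda>t. hh (Q t) (Q t) $a$b) has_vector_derivative (hh X Q' $a$b + hh Q' X $a$b)) (at 0)"
        using hh_deriv[OF Qd Qd, of a b] by (simp add: Q0)
      have c: "\<forall>t\<in>T. hh (Q t) (Q t) $a$b = mat 1 $a$b" using unit by simp
      show ?thesis using deriv_eq_on_open[OF T c d has_vector_derivative_const] by simp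
    qed
    then show ?thesis by (simp add: vec_eq_iff)
  qed
  have decd: "X ** R' + Q' = V"
  proof -
    have "(X ** R' + Q') $i$c = V $i$c" for i c
    proof -
      have d: "((\<lambda>t. (Q t ** hh (Q t) (X + t *\<^sub>R V)) $i$c) has_vector_derivative ((X ** R') $i$c + (Q' ** mat 1) $i$c)) (at 0)"
        using mm_deriv[OF Qd Rd, of i c] by (simp add: Q0 XX)
      have c: "\<forall>t\<in>T. (Q t ** hh (Q t) (X + t *\<^sub>R V)) $i$c = (X + t *\<^sub>R V)$i$c" using dec by simp
      show ?thesis using deriv_eq_on_open[OF T c d Md] by simp
    qed
    then show ?thesis by (simp add: vec_eq_iff)
  qed
  have Rlow: "R'$a$c = 0" if "ix c < ix a" for a c
  proof -
    have c: "\<forall>t\<in>T. hh (Q t) (X + t *\<^sub>R V) $a$c = 0" using up that by (simp add: upper_pos_def)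
    show ?thesis using deriv_eq_on_open[OF T c Rd has_vector_derivative_const] by simp
  qed
  have Rdiag: "R'$a$a = cnj (R'$a$a)" for a
  proof -
    have c: "\<forall>t\<in>T. hh (Q t) (X + t *\<^sub>R V) $a$a = cnj (hh (Q t) (X + t *\<^sub>R V) $a$a)"
      using up by (simp add: upper_pos_def complex_eq_iff)
    show ?thesis using deriv_eq_on_open[OF T c Rd has_vector_derivative_cnj[OF Rd]] .
  qed
  have skR: "R'$a$c + cnj (R'$c$a) = 0" for a c
  proof -
    have "R'$a$c + cnj (R'$c$a) = (hh X V + hh V X) $a$c + (hh Q' X + hh X Q') $a$c"
      by (simp add: R'_def cnj_hh)
    also have "\<dots> = 0" using sk unitd by (simp add: add.commute)
    finally show ?thesis .
  qed
  have "R' = 0"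
  proof -
    have "R'$a$c = 0" for a c
    proof (cases "ix c < ix a")
      case True then show ?thesis by (rule Rlow)
    next
      case False
      show ?thesis
      proof (cases "ix a < ix c")
        case True
        then have "R'$c$a = 0" by (rule Rlow)
        then show ?thesis using skR[of a c] by simp
      next
        case False
        then have "a = c" using \<open>\<not> ix c < ix a\<close> ix_inj by (metis linorder_neqE_nat)
        then have "R'$a$a + R'$a$a = 0" using skR[of a a] Rdiag[of a] by simp
        then show ?thesis using \<open>a = c\<close> by simp
      qed
    qed
    then show ?thesis by (simp add: vec_eq_iff)
  qed
  then show ?thesis using decd by simp
qed

lemma tensor_vderiv:
  fixes f :: "real \<Rightarrow> real^'l^'p^'n"
  assumes "\<And>i j k. ((\<lambda>t. f t $i$j$k) has_vector_derivative D$i$j$k) (at t0)"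
  shows "(f has_vector_derivative D) (at t0)"
proof -
  have bd: "((\<lambda>t. f t \<bullet> b) has_vector_derivative D \<bullet> b) (at t0)" if bB: "b \<in> Basis" for b
  proof -
    obtain i j k where "\<forall>x::real^'l^'p^'n. x \<bullet> b = x$i$j$k" using tensor_basis[OF bB] by blast
    then show ?thesis using assms by simp
  qed
  have "((\<lambda>t. \<Sum>b\<in>Basis. (f t \<bullet> b) *\<^sub>R b) has_vector_derivative (\<Sum>b\<in>Basis. (D \<bullet> b) *\<^sub>R b)) (at t0)"
    by (intro has_vector_derivative_sum bounded_linear.has_vector_derivative[OF bounded_linear_scaleR_left] bd)
  then show ?thesis by (simp add: euclidean_representation)
qed


lemma hat_add: "hat (A + B) k = hat A k + hat B k"
  by (simp add: dft_add fslice_def vec_eq_iff)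

lemma hat_scale: "hat (c *\<^sub>R A) k = c *\<^sub>R hat A k"
  by (simp add: dft_scale fslice_def vec_eq_iff)

lemma tprod_tid:
  fixes A :: "real^('l::enum)^('p::enum)^'n"
  shows "A \<star> tid = A"
  unfolding hat_eq_iff[symmetric] by (simp add: hat_tprod hat_tid)

lemma upper_pos_1: "upper_pos (mat 1 :: complex^('p::enum)^('p::enum))"
  by (auto simp: upper_pos_def mat_def)

lemma dft_tid_Cupp: "dft (tid :: real^('l::enum)^('p::enum)^('p::enum)) \<in> Cupp_pos"
  unfolding Cupp_pos_iff by (simp add: hat_tid upper_pos_1)

lemma stiefel_ok:
  fixes X :: "real^('l::enum)^('p::enum)^'n"
  assumes "X \<in> stiefel"
  shows "qf X = X" "\<forall>k. gs_ok (hat X k)"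
  using qf_unique[OF assms dft_tid_Cupp, of X] by (simp_all add: tprod_tid)

lemma tangent_ok:
  fixes X V :: "real^('l::enum)^('p::enum)^'n"
  assumes "X \<in> stiefel" "V \<in> tangent_space stiefel X"
  shows "inj ((*v) (hat (X + V) k))"
proof -
  have XX: "hh (hat X k) (hat X k) = mat 1" using assms(1) by (simp add: stiefel_iff)
  show ?thesis unfolding hat_add by (rule skew_inj[OF XX tangent_skew[OF assms]])
qed

definition Mf :: "'l \<Rightarrow> ((real^('l::enum)^('p::enum)^'n) \<times> (real^('l::enum)^('p::enum)^'n)) \<Rightarrow> complex^('p::enum)^'n" where
  "Mf k z = hat (fst z + snd z) k"

lemma Mf_sm: "sm UNIV (\<lambda>z. (Mf \<kappa> z :: complex^('p::enum)^'n) $i$c)" for \<kappa> :: "'l::enum"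
proof -
  have bl: "bounded_linear (\<lambda>z::(real^('l::enum)^('p::enum)^'n) \<times> (real^('l::enum)^('p::enum)^'n). (fst z + snd z)$i$c$k)" for k
  proof -
    have "bounded_linear (\<lambda>x::real^('l::enum)^('p::enum)^'n. x$i$c$k)"
      by (rule bounded_linear_compose[OF bounded_linear_vec_nth], rule bounded_linear_compose[OF bounded_linear_vec_nth], rule bounded_linear_vec_nth)
    moreover have "bounded_linear (\<lambda>z::(real^('l::enum)^('p::enum)^'n) \<times> (real^('l::enum)^('p::enum)^'n). fst z + snd z)"
      by (intro bounded_linear_add bounded_linear_fst bounded_linear_snd)
    ultimately show ?thesis using bounded_linear_compose by blast
  qed
  show ?thesis unfolding Mf_def fslice_def vec_lambda_beta dft_nth
    by (intro sm_sum sm_mult sm_const sm_lin[OF bl]) auto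
qed

abbreviation Uall :: "((real^('l::enum)^('p::enum)^'n) \<times> (real^('l::enum)^('p::enum)^'n)) set" where
  "Uall \<equiv> Okall Mf CARD('p)"

lemma Uall_iff: "z \<in> Uall \<longleftrightarrow> (\<forall>k. gs_ok (hat (fst z + snd z) k))"
  by (auto simp: Okall_def gs_ok_def Mf_def)

lemma Uall_open: "open Uall"
  by (rule conjunct1[OF gs_sm_open[OF Mf_sm]])

lemma gq_sm_all: "\<forall>\<kappa>. \<forall>j<CARD('p). \<forall>i. sm (Okall Mf CARD('p)) (\<lambda>z. gq (Mf \<kappa> z :: complex^('p::enum)^'n) j $ i)"
  by (rule conjunct2[OF gs_sm_open[OF Mf_sm]])

lemma Q0_sm:
  "sm (Uall :: ((real^('l::enum)^('p::enum)^'n) \<times> (real^('l::enum)^('p::enum)^'n)) set)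
      (\<lambda>z. complex_of_real (Q0 (fst z + snd z) $i$j$k))"
proof -
  let ?S = "\<lambda>z. (\<Sum>\<kappa>\<in>UNIV. cnj (omega TYPE('l) ^ (ix \<kappa> * ix k)) * gq (Mf \<kappa> z :: complex^('p::enum)^'n) (ix j) $ i)"
  have S: "sm (Uall :: ((real^('l::enum)^('p::enum)^'n) \<times> (real^('l::enum)^('p::enum)^'n)) set)
      (\<lambda>z. complex_of_real (Re (?S z)) * complex_of_real (1 / real CARD('l)))"
    by (intro sm_mult sm_Re sm_sum sm_const gq_sm_all[rule_format]) auto
  have eq: "Q0 (fst z + snd z) $i$j$k = Re (?S z) / real CARD('l)"
    for z :: "(real^('l::enum)^('p::enum)^'n) \<times> (real^('l::enum)^('p::enum)^'n)"
    unfolding Q0_def idft_def gsQ_def Mf_def vec_lambda_beta ..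
  have e: "(\<lambda>z. complex_of_real (Re (?S z)) * complex_of_real (1 / real CARD('l)))
      = (\<lambda>z. complex_of_real (Q0 (fst z + snd z) $i$j$k))"
  proof
    fix z :: "(real^('l::enum)^('p::enum)^'n) \<times> (real^('l::enum)^('p::enum)^'n)"
    show "complex_of_real (Re (?S z)) * complex_of_real (1 / real CARD('l)) = complex_of_real (Q0 (fst z + snd z) $i$j$k)"
      unfolding eq by simp
  qed
  show ?thesis by (rule sm_eq[OF S e])
qed


lemma gs_ok_tb:
  fixes X V :: "real^('l::enum)^('p::enum)^'n"
  assumes "X \<in> stiefel" "V \<in> tangent_space stiefel X"
  shows "(X, V) \<in> Uall"
  unfolding Uall_iff using gs_ok_inj[OF tangent_ok[OF assms]] by simp

lemma slice_deriv:
  fixes X V :: "real^('l::enum)^('p::enum)^'n" and \<kappa> :: 'l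
  assumes X: "X \<in> stiefel" and V: "V \<in> tangent_space stiefel X"
    and T: "T = {t. (X, t *\<^sub>R V) \<in> Uall}"
  shows "((\<lambda>t. gsQ (hat (X + t *\<^sub>R V) \<kappa>) $i$a) has_vector_derivative hat V \<kappa> $i$a) (at 0)"
proof -
  let ?z0 = "(X, 0 :: real^('l::enum)^('p::enum)^'n)"
  have z0: "?z0 \<in> Uall" unfolding Uall_iff using stiefel_ok(2)[OF X] by simp
  have openT: "open T" unfolding T
    using continuous_open_vimage[OF Uall_open, of "\<lambda>t. (X, t *\<^sub>R V)"]
    by (auto intro!: continuous_intros simp: vimage_def)
  have T0: "0 \<in> T" using z0 T by simp
  let ?Q = "\<lambda>t. gsQ (hat (X + t *\<^sub>R V) \<kappa>)"
  have ex: "\<exists>d. ((\<lambda>t. ?Q t $i'$a') has_vector_derivative d) (at 0)" for i' a'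
  proof -
    have sm: "sm Uall (\<lambda>z. gq (Mf \<kappa> z :: complex^('p::enum)^'n) (ix a') $ i')"
      by (rule gq_sm_all[rule_format]) simp
    obtain D where D: "\<forall>x\<in>Uall. ((\<lambda>z. gq (Mf \<kappa> z :: complex^('p::enum)^'n) (ix a') $ i') has_derivative D x) (at x)"
      using sm_deriv[OF sm] by blast
    have "((\<lambda>t. gq (Mf \<kappa> (?z0 + t *\<^sub>R (0, V))) (ix a') $ i') has_vector_derivative D ?z0 (0, V)) (at 0)"
      by (rule line_deriv[OF Uall_open z0]) (use D z0 in auto)
    moreover have "gq (Mf \<kappa> (?z0 + t *\<^sub>R (0, V))) (ix a') $ i' = ?Q t $i'$a'" for t
      by (simp add: Mf_def gsQ_def)
    ultimately show ?thesis by auto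
  qed
  define Q' where "Q' = (\<chi> i' a'. vector_derivative (\<lambda>t. ?Q t $i'$a') (at 0))"
  have Qd: "((\<lambda>t. ?Q t $i'$a') has_vector_derivative Q'$i'$a') (at 0)" for i' a'
  proof -
    obtain d where d: "((\<lambda>t. ?Q t $i'$a') has_vector_derivative d) (at 0)" using ex by blast
    then show ?thesis by (simp add: Q'_def vector_derivative_at[OF d])
  qed
  have XX: "hh (hat X \<kappa>) (hat X \<kappa>) = mat 1" using X by (simp add: stiefel_iff)
  have Q0: "?Q 0 = hat X \<kappa>"
    using gs_unique[OF XX upper_pos_1, of "hat X \<kappa>"] by simp
  have okT: "gs_ok (hat X \<kappa> + t *\<^sub>R hat V \<kappa>)" if "t \<in> T" for t
    using that unfolding T Uall_iff by (simp add: hat_add hat_scale)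
  have "Q' = hat V \<kappa>"
  proof (rule deriv_core[OF openT T0 Qd Q0 tangent_skew[OF X V]])
    show "\<forall>t\<in>T. hh (?Q t) (?Q t) = mat 1" using okT by (simp add: hat_add hat_scale gs_unitary)
    show "\<forall>t\<in>T. upper_pos (hh (?Q t) (hat X \<kappa> + t *\<^sub>R hat V \<kappa>))" using okT by (simp add: hat_add hat_scale gs_upper)
    show "\<forall>t\<in>T. ?Q t ** hh (?Q t) (hat X \<kappa> + t *\<^sub>R hat V \<kappa>) = hat X \<kappa> + t *\<^sub>R hat V \<kappa>"
      using okT by (simp add: hat_add hat_scale gs_decomp)
  qed
  then show ?thesis using Qd by simp
qed


lemma retr_deriv:
  fixes X V :: "real^('l::enum)^('p::enum)^'n"
  assumes X: "X \<in> stiefel" and V: "V \<in> tangent_space stiefel X"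
  shows "((\<lambda>t. qf (X + t *\<^sub>R V)) has_vector_derivative V) (at 0)"
proof -
  define T where "T = {t. (X, t *\<^sub>R V) \<in> (Uall :: ((real^('l::enum)^('p::enum)^'n) \<times> (real^('l::enum)^('p::enum)^'n)) set)}"
  have openT: "open T" unfolding T_def
    using continuous_open_vimage[OF Uall_open, of "\<lambda>t. (X, t *\<^sub>R V)"]
    by (auto intro!: continuous_intros simp: vimage_def)
  have T0: "0 \<in> T" unfolding T_def Uall_iff using stiefel_ok(2)[OF X] by simp
  have sd: "((\<lambda>t. gsQ (hat (X + t *\<^sub>R V) \<kappa>) $i$a) has_vector_derivative hat V \<kappa> $i$a) (at 0)" for \<kappa> i a
    by (rule slice_deriv[OF X V T_def])
  have comp: "((\<lambda>t. Q0 (X + t *\<^sub>R V) $i$j$k) has_vector_derivative V$i$j$k) (at 0)" for i j k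
  proof -
    let ?S = "\<lambda>t. (\<Sum>\<kappa>\<in>UNIV. cnj (omega TYPE('l) ^ (ix \<kappa> * ix k)) * gsQ (hat (X + t *\<^sub>R V) \<kappa>) $i$j)"
    have "(?S has_vector_derivative (\<Sum>\<kappa>\<in>UNIV. cnj (omega TYPE('l) ^ (ix \<kappa> * ix k)) * hat V \<kappa> $i$j)) (at 0)"
      by (intro has_vector_derivative_sum has_vector_derivative_mult_right sd)
    then have "((\<lambda>t. Re (?S t) / real CARD('l)) has_vector_derivative
        Re (\<Sum>\<kappa>\<in>UNIV. cnj (omega TYPE('l) ^ (ix \<kappa> * ix k)) * hat V \<kappa> $i$j) / real CARD('l)) (at 0)"
      using bounded_linear.has_vector_derivative[OF bounded_linear_compose[OF bounded_linear_divide bounded_linear_Re]]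
      by blast
    moreover have "Re (\<Sum>\<kappa>\<in>UNIV. cnj (omega TYPE('l) ^ (ix \<kappa> * ix k)) * hat V \<kappa> $i$j) / real CARD('l) = V$i$j$k"
      using arg_cong[OF idft_dft[of V], of "\<lambda>A. A$i$j$k"] by (simp add: idft_def fslice_def)
    moreover have "Q0 (X + t *\<^sub>R V) $i$j$k = Re (?S t) / real CARD('l)" for t
      by (simp add: Q0_def idft_def fslice_def)
    ultimately show ?thesis by simp
  qed
  have "((\<lambda>t. Q0 (X + t *\<^sub>R V)) has_vector_derivative V) (at 0)"
    by (rule tensor_vderiv) (rule comp)
  then show ?thesis
  proof (rule has_vector_derivative_transform_within_open[OF _ openT T0])
    fix t assume "t \<in> T"
    then have "\<forall>k. gs_ok (hat (X + t *\<^sub>R V) k)" unfolding T_def Uall_iff by simp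
    then show "Q0 (X + t *\<^sub>R V) = qf (X + t *\<^sub>R V)" using qf_Q0(2) by metis
  qed
qed

theorem mainTheorem5:
  assumes "CARD('p::enum) \<le> CARD('n::finite)"
  shows "(\<forall>X \<in> (stiefel :: (real^('l::enum)^('p::enum)^('n::finite)) set).
            \<forall>V \<in> tangent_space stiefel X. dft (X + V) \<in> Cstar)
         \<and> is_retraction (stiefel :: (real^('l::enum)^('p::enum)^('n::finite)) set) (\<lambda>(X, V). qf (X + V))"
proof
  show "\<forall>X \<in> (stiefel :: (real^('l::enum)^('p::enum)^('n::finite)) set).
            \<forall>V \<in> tangent_space stiefel X. dft (X + V) \<in> Cstar"
    unfolding Cstar_def using inj_rank[OF tangent_ok] by blast
  let ?R = "(\<lambda>(X, V). qf (X + V)) :: (real^('l::enum)^('p::enum)^('n::finite)) \<times> (real^('l::enum)^('p::enum)^('n::finite)) \<Rightarrow> _"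
  have tb: "z \<in> tangent_bundle stiefel \<Longrightarrow> z \<in> Uall" for z :: "(real^('l::enum)^('p::enum)^('n::finite)) \<times> (real^('l::enum)^('p::enum)^('n::finite))"
    by (cases z) (auto simp: tangent_bundle_def intro: gs_ok_tb)
  have RQ: "?R z = Q0 (fst z + snd z)" if "z \<in> Uall" for z
    using that qf_Q0(2)[of "fst z + snd z"] by (cases z) (auto simp: Uall_iff)
  show "is_retraction stiefel ?R"
    unfolding is_retraction_def
  proof (intro conjI)
    show "\<forall>z\<in>tangent_bundle stiefel. ?R z \<in> stiefel"
    proof
      fix z assume "z \<in> tangent_bundle (stiefel :: (real^('l::enum)^('p::enum)^('n::finite)) set)"
      then have "z \<in> Uall" by (rule tb)
      then show "?R z \<in> stiefel" using RQ qf_Q0(1) by (auto simp: Uall_iff)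
    qed
    show "smooth_on_set (tangent_bundle stiefel) ?R"
      unfolding smooth_on_set_def
    proof
      fix z assume z: "z \<in> tangent_bundle (stiefel :: (real^('l::enum)^('p::enum)^('n::finite)) set)"
      have "smooth_on Uall (\<lambda>z. Q0 (fst z + snd z) :: real^('l::enum)^('p::enum)^('n::finite))"
        by (rule smv_smooth[OF Uall_open smv_tensor[OF Q0_sm]])
      moreover have "\<forall>w\<in>Uall \<inter> tangent_bundle stiefel. Q0 (fst w + snd w) = ?R w" using RQ by auto
      ultimately show "\<exists>U F. open U \<and> z \<in> U \<and> smooth_on U F \<and> (\<forall>w\<in>U \<inter> tangent_bundle stiefel. F w = ?R w)"
        using Uall_open tb[OF z] by blast
    qed
    show "\<forall>x\<in>stiefel. ?R (x, 0) = x" by (auto simp: stiefel_ok(1))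
    show "\<forall>x\<in>stiefel. \<forall>v\<in>tangent_space stiefel x. ((\<lambda>t. ?R (x, t *\<^sub>R v)) has_vector_derivative v) (at 0)"
      by (auto intro: retr_deriv)
  qed
qed


end
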